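(* Let $p(t)=\sum_{i=0}^\infty a_it^i$ with $0\le a_i<1$ for all $i$ and $\sum_i a_i=1$, and write $p(t)=t^rp_0(t)$ where $r\ge0$ is an integer, $p_0(0)\neq0$, and $p_0$ has at least two nonzero coefficients; let $Q=\{q\ge0:\ \text{the coefficient of } t^q \text{ in } p_0 \text{ is nonzero}\}$. Let $p^{[1]}=p$, $p^{[n+1]}=p(p^{[n]})$, $p^{[n]}(t)=\sum_k a_k^{[n]}t^k$, and $a=\lim_{n\to\infty}a_0^{[n]}$. Fix $m\in\mathbb N$, let $C_m$ be the cyclic group of order $m$ generated by $\bar t$ with identity $e=\bar t^0$, and for a power series $f(t)=\sum_kf_kt^k$ with absolutely summable coefficients put $f(\bar t)=\sum_kf_k\bar t^k\in R[C_m]$. Let $G_{p_0}$ be the subgroup of $C_m$ generated by $\{\bar t^q: q\in Q\}$ and $c_{p_0}=\frac1{|G_{p_0}|}\sum_{g\in G_{p_0}}g$. Let $d\ge1$ and distinct $m_0,\dots,m_{d-1}\in\{0,\dots,m-1\}$ be such that $r^{kd+i}\equiv m_i \pmod m$ for all $i\in\{0,\dots,d-1\}$ and all sufficiently large $k$. Then: (1) If $\bigcap_{i=0}^{d-1}\bar t^{m_i}G_{p_0}=\emptyset$, then $\lim_{n\to\infty}p^{[n]}(\bar t)$ does not exist. (2) If $\bigcap_{i=0}^{d-1}\bar t^{m_i}G_{p_0}\neq\emptyset$, then $\bar t^{m_i}G_{p_0}=\bar t^{m_j}G_{p_0}$ for all $i,j\in\{0,\dots,d-1\}$, the limit $\lim_{n\to\infty}p^{[n]}(\bar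 t)$ exists, and $$\lim_{n\to\infty}p^{[n]}(\bar t)=\bar t^{m_0}c_{p_0}+(e-c_{p_0})a.$$
   Context: $R[C_m]$ is the real group algebra of $C_m$ (equivalently $\mathbb R[t]/(t^m-1)$ with $\bar t$ the class of $t$), with the Euclidean topology. The limit $a=\lim a_0^{[n]}$ exists since $(a_0^{[n]})$ is monotone and bounded. The sequence $(r^k \bmod m)_k$ is eventually periodic, which guarantees the existence of $d$ and $m_0,\dots,m_{d-1}$ as described. *)

theory Defs
  imports "HOL-Analysis.Analysis" "HOL-Algebra.Elementary_Groups" "HOL-Algebra.Generated_Groups"
begin

text \<open>Power series are represented by their coefficient sequences nat => real.
  pow_coeff f i k is the coefficient of t^k in f(t)^i (Cauchy product).\<close>

fun pow_coeff :: "(nat \<Rightarrow> real) \<Rightarrow> nat \<Rightarrow> nat \<Rightarrow> real" where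
  "pow_coeff f 0 k = (if k = 0 then 1 else 0)"
| "pow_coeff f (Suc i) k = (\<Sum>j\<le>k. f j * pow_coeff f i (k - j))"

definition comp_coeff :: "(nat \<Rightarrow> real) \<Rightarrow> (nat \<Rightarrow> real) \<Rightarrow> nat \<Rightarrow> real" where
  "comp_coeff a f k = (\<Sum>i. a i * pow_coeff f i k)"

text \<open>Iterates: iter a 0 = t, iter a (Suc n) = p(iter a n); hence iter a n = p^[n] for n >= 1.\<close>
fun iter :: "(nat \<Rightarrow> real) \<Rightarrow> nat \<Rightarrow> nat \<Rightarrow> real" where
  "iter a 0 = (\<lambda>k. if k = 1 then 1 else 0)"
| "iter a (Suc n) = comp_coeff a (iter a n)"

text \<open>Elements of R[C_m] are functions int => real supported on {0..<m}; the group element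
  bar t^j is the residue j in carrier (integer_mod_group m).  The topology is the product
  topology, which on this finite-dimensional subspace is the Euclidean one.\<close>

definition ev_Cm :: "nat \<Rightarrow> (nat \<Rightarrow> real) \<Rightarrow> int \<Rightarrow> real" where
  "ev_Cm m f = (\<lambda>j. if j \<in> {0..<int m} then (\<Sum>k. if int k mod int m = j then f k else 0) else 0)"

definition gr_basis :: "nat \<Rightarrow> int \<Rightarrow> int \<Rightarrow> real" where
  "gr_basis m g = (\<lambda>j. if j \<in> {0..<int m} \<and> j = g mod int m then 1 else 0)"

definition gr_mult :: "nat \<Rightarrow> (int \<Rightarrow> real) \<Rightarrow> (int \<Rightarrow> real) \<Rightarrow> int \<Rightarrow> real" where
  "gr_mult m x y = (\<lambda>j. if j \<in> {0..<int m}
      then (\<Sum>i\<in>{0..<int m}. x i * y ((j - i) mod int m)) else 0)"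

definition gr_sum :: "nat \<Rightarrow> int set \<Rightarrow> int \<Rightarrow> real" where
  "gr_sum m S = (\<lambda>j. \<Sum>g\<in>S. gr_basis m g j)"

definition G_p0 :: "nat \<Rightarrow> (nat \<Rightarrow> real) \<Rightarrow> nat \<Rightarrow> int set" where
  "G_p0 m a r = generate (integer_mod_group m) {int q mod int m | q. a (r + q) \<noteq> 0}"

definition c_p0 :: "nat \<Rightarrow> (nat \<Rightarrow> real) \<Rightarrow> nat \<Rightarrow> int \<Rightarrow> real" where
  "c_p0 m a r = (\<lambda>j. (1 / real (card (G_p0 m a r))) * gr_sum m (G_p0 m a r) j)"

definition coset_Cm :: "nat \<Rightarrow> int \<Rightarrow> int set \<Rightarrow> int set" where
  "coset_Cm m g H = l_coset (integer_mod_group m) g H"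

end

theory Submission
  imports Defs
begin


lemma pow_coeff_nonneg: "(\<And>k. 0 \<le> f k) \<Longrightarrow> 0 \<le> pow_coeff f i k"
  by (induction i arbitrary: k) (auto intro!: sum_nonneg mult_nonneg_nonneg)

lemma pow_coeff_sums_real:
  assumes nn: "\<And>k. 0 \<le> f k" and sf: "summable f"
  shows "pow_coeff f i sums (suminf f ^ i)"
proof (induction i)
  case 0
  have "pow_coeff f 0 = (\<lambda>k. if k = 0 then 1 else 0)" by (rule ext) simp
  then show ?case using sums_single[of 0 "\<lambda>_. 1::real"] by simp
next
  case (Suc i)
  have "(\<lambda>k. \<Sum>j\<le>k. f j * pow_coeff f i (k - j)) sums (suminf f * suminf (pow_coeff f i))"
    apply (rule Cauchy_product_sums)
    using sf Suc nn pow_coeff_nonneg[of f, OF nn] by (auto simp: sums_iff)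
  then show ?case using Suc by (simp add: sums_iff)
qed

lemma pow_coeff_le1:
  assumes nn: "\<And>k. 0 \<le> f k" and sf: "summable f" and s1: "suminf f \<le> 1"
  shows "pow_coeff f i k \<le> 1"
proof -
  have "pow_coeff f i k = sum (pow_coeff f i) {k}" by simp
  also have "\<dots> \<le> suminf (pow_coeff f i)"
    using pow_coeff_sums_real[OF nn sf, of i] pow_coeff_nonneg[of f, OF nn]
    by (intro sum_le_suminf) (auto simp: sums_iff)
  also have "\<dots> = suminf f ^ i" using pow_coeff_sums_real[OF nn sf, of i] by (simp add: sums_iff)
  also have "\<dots> \<le> 1" using s1 suminf_nonneg[OF sf nn] by (simp add: power_le_one)
  finally show ?thesis .
qed

lemma powser_norm_summable:
  fixes z :: "'a::{real_normed_field,banach}"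
  assumes nn: "\<And>k. 0 \<le> f k" and sf: "summable f" and z: "norm z \<le> 1"
  shows "summable (\<lambda>k. norm (of_real (f k) * z ^ k))"
proof (rule summable_comparison_test'[OF sf])
  fix k :: nat
  have "norm (norm (of_real (f k) * z ^ k)) = f k * norm z ^ k"
    using nn by (simp add: norm_mult norm_power)
  also have "\<dots> \<le> f k * 1" using nn z by (intro mult_left_mono power_le_one) auto
  finally show "norm (norm (of_real (f k) * z ^ k)) \<le> f k" by simp
qed

lemma powser_norm_le:
  fixes z :: "'a::{real_normed_field,banach}"
  assumes nn: "\<And>k. 0 \<le> f k" and sf: "summable f" and z: "norm z \<le> 1"
  shows "norm (\<Sum>k. of_real (f k) * z ^ k) \<le> suminf f"
proof -
  have "norm (\<Sum>k. of_real (f k) * z ^ k) \<le> (\<Sum>k. norm (of_real (f k) * z ^ k))"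
    by (rule summable_norm[OF powser_norm_summable[OF nn sf z]])
  also have "\<dots> \<le> suminf f"
  proof (rule suminf_le[OF _ powser_norm_summable[OF nn sf z] sf])
    fix k
    have "norm (of_real (f k) * z ^ k) = f k * norm z ^ k"
      using nn by (simp add: norm_mult norm_power)
    also have "\<dots> \<le> f k * 1" using nn z by (intro mult_left_mono power_le_one) auto
    finally show "norm (of_real (f k) * z ^ k) \<le> f k" by simp
  qed
  finally show ?thesis .
qed

lemma pow_coeff_sums:
  fixes z :: "'a::{real_normed_field,banach}"
  assumes nn: "\<And>k. 0 \<le> f k" and sf: "summable f" and z: "norm z \<le> 1"
  shows "(\<lambda>k. of_real (pow_coeff f i k) * z ^ k) sums ((\<Sum>k. of_real (f k) * z ^ k) ^ i)"
proof (induction i)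
  case 0
  have "(\<lambda>k. of_real (pow_coeff f 0 k) * z ^ k) = (\<lambda>k. if k = 0 then 1 else 0)" by (rule ext) simp
  then show ?case using sums_single[of 0 "\<lambda>_. 1::'a"] by simp
next
  case (Suc i)
  have s2: "summable (pow_coeff f i)" using pow_coeff_sums_real[OF nn sf] by (auto simp: sums_iff)
  have "(\<lambda>k. \<Sum>j\<le>k. (of_real (f j) * z ^ j) * (of_real (pow_coeff f i (k - j)) * z ^ (k - j)))
      sums ((\<Sum>k. of_real (f k) * z ^ k) * (\<Sum>k. of_real (pow_coeff f i k) * z ^ k))"
    by (rule Cauchy_product_sums[OF powser_norm_summable[OF nn sf z]
          powser_norm_summable[OF pow_coeff_nonneg[of f, OF nn] s2 z]])
  moreover have "(\<lambda>k. \<Sum>j\<le>k. (of_real (f j) * z ^ j) * (of_real (pow_coeff f i (k - j)) * z ^ (k - j)))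
      = (\<lambda>k. of_real (pow_coeff f (Suc i) k) * z ^ k)"
  proof (rule ext)
    fix k
    have "(\<Sum>j\<le>k. (of_real (f j) * z ^ j) * (of_real (pow_coeff f i (k - j)) * z ^ (k - j)))
        = (\<Sum>j\<le>k. of_real (f j * pow_coeff f i (k - j)) * z ^ k)"
    proof (rule sum.cong[OF refl])
      fix j assume "j \<in> {..k}"
      then have "z ^ j * z ^ (k - j) = z ^ k" by (simp add: power_add[symmetric])
      then show "(of_real (f j) * z ^ j) * (of_real (pow_coeff f i (k - j)) * z ^ (k - j))
          = of_real (f j * pow_coeff f i (k - j)) * z ^ k"
        by (metis (no_types, lifting) mult.assoc mult.left_commute of_real_mult)
    qed
    also have "\<dots> = of_real (pow_coeff f (Suc i) k) * z ^ k"
      by (simp add: sum_distrib_right)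
    finally show "(\<Sum>j\<le>k. (of_real (f j) * z ^ j) * (of_real (pow_coeff f i (k - j)) * z ^ (k - j)))
      = of_real (pow_coeff f (Suc i) k) * z ^ k" .
  qed
  ultimately show ?case using Suc by (simp add: sums_iff)
qed

lemma comp_coeff_sums:
  fixes z :: "'a::{real_normed_field,banach}"
  assumes an: "\<And>i. 0 \<le> a i" and sa: "summable a"
    and nn: "\<And>k. 0 \<le> f k" and sf: "summable f" and s1: "suminf f \<le> 1" and z: "norm z \<le> 1"
  shows "(\<lambda>k. of_real (comp_coeff a f k) * z ^ k) sums (\<Sum>i. of_real (a i) * (\<Sum>k. of_real (f k) * z ^ k) ^ i)"
proof -
  define F where "F = (\<Sum>k. of_real (f k) * z ^ k)"
  define s where "s = suminf f"
  have s0: "0 \<le> s" unfolding s_def by (rule suminf_nonneg[OF sf nn])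
  have s1': "s \<le> 1" using s1 s_def by simp
  have pcn: "\<And>i k. 0 \<le> pow_coeff f i k" by (rule pow_coeff_nonneg[OF nn])
  define H where "H = (\<lambda>(i,k). a i * pow_coeff f i k)"
  define h where "h = (\<lambda>(i,k). of_real (a i) * (of_real (pow_coeff f i k) * z ^ k) :: 'a)"
  have Hs: "H summable_on Sigma UNIV (\<lambda>_. UNIV)"
  proof (rule summable_on_SigmaI[where g = "\<lambda>i. a i * s ^ i"])
    fix i :: nat
    have "(\<lambda>k. a i * pow_coeff f i k) sums (a i * s ^ i)"
      using sums_mult[OF pow_coeff_sums_real[OF nn sf, of i], of "a i"] s_def by simp
    then show "((\<lambda>k. H (i, k)) has_sum a i * s ^ i) UNIV"
      unfolding H_def using an pcn by (auto intro!: sums_nonneg_imp_has_sum)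
  next
    have "summable (\<lambda>i. a i * s ^ i)"
    proof (rule summable_comparison_test'[OF sa])
      fix i show "norm (a i * s ^ i) \<le> a i"
        using an s0 s1' by (auto simp: abs_mult intro!: mult_left_le power_le_one)
    qed
    then show "(\<lambda>i. a i * s ^ i) summable_on UNIV"
      using an s0 by (auto intro!: summable_nonneg_imp_summable_on_strong)
  next
    fix i k show "0 \<le> H (i, k)" unfolding H_def using an pcn by simp
  qed
  have hn: "norm (h x) \<le> H x" for x
  proof (cases x)
    case (Pair i k)
    have "norm (h x) = a i * (pow_coeff f i k * norm z ^ k)"
      using an pcn Pair by (simp add: h_def norm_mult norm_power)
    also have "\<dots> \<le> a i * (pow_coeff f i k * 1)"
      using an pcn z by (intro mult_left_mono power_le_one) auto
    finally show ?thesis using Pair by (simp add: H_def)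
  qed
  have hs: "h summable_on UNIV \<times> UNIV"
    apply (rule abs_summable_summable)
    apply (rule summable_on_comparison_test[OF Hs])
    using hn by auto
  have swap: "infsum (\<lambda>i. infsum (\<lambda>k. h (i,k)) UNIV) UNIV = infsum (\<lambda>k. infsum (\<lambda>i. h (i,k)) UNIV) UNIV"
    using infsum_swap_banach[of "\<lambda>i k. h (i,k)" UNIV UNIV] hs by simp
  have row: "infsum (\<lambda>k. h (i,k)) UNIV = of_real (a i) * F ^ i" for i
  proof -
    have "(\<lambda>k. of_real (a i) * (of_real (pow_coeff f i k) * z ^ k)) sums (of_real (a i) * F ^ i)"
      using sums_mult[OF pow_coeff_sums[OF nn sf z, of i], of "of_real (a i)"] F_def by simp
    moreover have "summable (\<lambda>k. norm (of_real (a i) * (of_real (pow_coeff f i k) * z ^ k) :: 'a))"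
    proof -
      have s2: "summable (pow_coeff f i)" using pow_coeff_sums_real[OF nn sf] by (auto simp: sums_iff)
      show ?thesis
      using summable_mult[OF powser_norm_summable[where f="pow_coeff f i", OF pcn s2 z], of "a i"]
        an by (auto simp: norm_mult mult.assoc)
    qed
    ultimately show ?thesis unfolding h_def
      by (auto intro!: infsumI norm_summable_imp_has_sum)
  qed
  have FN: "norm F \<le> 1" using powser_norm_le[OF nn sf z] s1 F_def by simp
  have lhs: "infsum (\<lambda>i. of_real (a i) * F ^ i) UNIV = (\<Sum>i. of_real (a i) * F ^ i)"
  proof -
    have ns: "summable (\<lambda>i. norm (of_real (a i) * F ^ i))"
    proof (rule summable_comparison_test'[OF sa])
      fix i
      have "norm (norm (of_real (a i) * F ^ i)) = a i * norm F ^ i"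
        using an by (simp add: norm_mult norm_power)
      also have "\<dots> \<le> a i * 1" using an FN by (intro mult_left_mono power_le_one) auto
      finally show "norm (norm (of_real (a i) * F ^ i)) \<le> a i" by simp
    qed
    show ?thesis
      by (rule infsumI, rule norm_summable_imp_has_sum[OF ns summable_sums[OF summable_norm_cancel[OF ns]]])
  qed
  have col: "((\<lambda>i. h (i,k)) has_sum (of_real (comp_coeff a f k) * z ^ k)) UNIV" for k
  proof -
    have sk: "summable (\<lambda>i. a i * pow_coeff f i k)"
    proof (rule summable_comparison_test'[OF sa])
      fix i show "norm (a i * pow_coeff f i k) \<le> a i"
        using an pcn pow_coeff_le1[OF nn sf s1] by (auto simp: abs_mult intro!: mult_left_le)
    qed
    have "(\<lambda>i. of_real (a i * pow_coeff f i k) * z ^ k) sums (of_real (comp_coeff a f k) * z ^ k)"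
      unfolding comp_coeff_def
      by (rule sums_mult2, rule sums_of_real, rule summable_sums[OF sk])
    moreover have "summable (\<lambda>i. norm (of_real (a i * pow_coeff f i k) * z ^ k :: 'a))"
      using summable_mult2[OF sk, of "norm (z^k)"] an pcn
      by (simp add: norm_mult abs_mult)
    ultimately show ?thesis unfolding h_def
      by (auto intro!: norm_summable_imp_has_sum simp: mult.assoc)
  qed
  have colsum: "((\<lambda>k. infsum (\<lambda>i. h (i,k)) UNIV) has_sum infsum h (UNIV \<times> UNIV)) UNIV"
  proof -
    have hs': "(\<lambda>(k,i). h (i,k)) summable_on UNIV \<times> UNIV"
      using hs summable_on_swap[of h UNIV UNIV] by simp
    have "((\<lambda>(k,i). h (i,k)) has_sum infsum (\<lambda>(k,i). h (i,k)) (UNIV \<times> UNIV)) (UNIV \<times> UNIV)"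
      using hs' by (rule has_sum_infsum)
    then have "((\<lambda>k. infsum (\<lambda>i. h (i,k)) UNIV) has_sum infsum (\<lambda>(k,i). h (i,k)) (UNIV \<times> UNIV)) UNIV"
    proof (rule has_sum_SigmaD[where g="\<lambda>k. infsum (\<lambda>i. h (i,k)) UNIV"])
      fix k :: nat
      have "(\<lambda>i. h (i,k)) summable_on UNIV" using col[of k] by (auto simp: summable_on_def)
      then show "((\<lambda>i. (\<lambda>(k, i). h (i, k)) (k, i)) has_sum (\<Sum>\<^sub>\<infinity>i. h (i, k))) UNIV"
        by (simp add: has_sum_infsum)
    qed
    moreover have "infsum (\<lambda>(k,i). h (i,k)) (UNIV \<times> UNIV) = infsum h (UNIV \<times> UNIV)"
      using infsum_swap_banach[of "\<lambda>i k. h (i,k)" UNIV UNIV] hs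
        infsum_Sigma_banach[of h UNIV "\<lambda>_. UNIV"] infsum_Sigma_banach[of "\<lambda>(k,i). h (i,k)" UNIV "\<lambda>_. UNIV"] hs'
      by simp
    ultimately show ?thesis by simp
  qed
  have "infsum h (UNIV \<times> UNIV) = (\<Sum>i. of_real (a i) * F ^ i)"
    using infsum_Sigma_banach[of h UNIV "\<lambda>_. UNIV"] hs row lhs by simp
  moreover have "(\<lambda>k. infsum (\<lambda>i. h (i,k)) UNIV) = (\<lambda>k. of_real (comp_coeff a f k) * z ^ k)"
    using col by (auto intro!: ext infsumI)
  ultimately show ?thesis using colsum F_def by (auto intro!: has_sum_imp_sums)
qed

lemma comp_coeff_nonneg:
  assumes an: "\<And>i. 0 \<le> a i" and sa: "summable a"
    and nn: "\<And>k. 0 \<le> f k" and sf: "summable f" and s1: "suminf f \<le> 1"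
  shows "0 \<le> comp_coeff a f k"
proof -
  have pcn: "\<And>i k. 0 \<le> pow_coeff f i k" by (rule pow_coeff_nonneg[OF nn])
  have sk: "summable (\<lambda>i. a i * pow_coeff f i k)"
  proof (rule summable_comparison_test'[OF sa])
    fix i show "norm (a i * pow_coeff f i k) \<le> a i"
      using an pcn pow_coeff_le1[OF nn sf s1] by (auto simp: abs_mult intro!: mult_left_le)
  qed
  show ?thesis unfolding comp_coeff_def using sk an pcn by (auto intro!: suminf_nonneg)
qed

definition Pc :: "(nat \<Rightarrow> real) \<Rightarrow> 'a::{real_normed_field,banach} \<Rightarrow> 'a" where
  "Pc a w = (\<Sum>i. of_real (a i) * w ^ i)"

lemma iter_real:
  assumes an: "\<And>i. 0 \<le> a i" and sa: "a sums 1"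
  shows "(\<forall>k. 0 \<le> iter a n k) \<and> iter a n sums 1"
proof (induction n)
  case 0
  have "iter a 0 = (\<lambda>k. if k = 1 then 1 else 0)" by simp
  then show ?case using sums_single[of 1 "\<lambda>_. 1::real"] by simp
next
  case (Suc n)
  have sa': "summable a" using sa by (auto simp: sums_iff)
  have nn: "\<And>k. 0 \<le> iter a n k" and sf: "summable (iter a n)" and s1: "suminf (iter a n) = 1"
    using Suc by (auto simp: sums_iff)
  have "(\<lambda>k. of_real (comp_coeff a (iter a n) k) * (1::real) ^ k) sums
      (\<Sum>i. of_real (a i) * (\<Sum>k. of_real (iter a n k) * (1::real) ^ k) ^ i)"
    by (rule comp_coeff_sums[OF an sa' nn sf]) (use s1 in auto)
  then have "comp_coeff a (iter a n) sums 1" using s1 sa by (simp add: sums_iff)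
  then show ?case using comp_coeff_nonneg[OF an sa' nn sf] s1 by simp
qed

lemma iter_sums:
  fixes z :: "'a::{real_normed_field,banach}"
  assumes an: "\<And>i. 0 \<le> a i" and sa: "a sums 1" and z: "norm z \<le> 1"
  shows "(\<lambda>k. of_real (iter a n k) * z ^ k) sums ((Pc a ^^ n) z)"
proof (induction n)
  case 0
  have "(\<lambda>k. of_real (iter a 0 k) * z ^ k) = (\<lambda>k. if k = 1 then z ^ k else 0)" by (rule ext) simp
  then show ?case using sums_single[of 1 "\<lambda>k. z ^ k"] by simp
next
  case (Suc n)
  have sa': "summable a" using sa by (auto simp: sums_iff)
  have nn: "\<And>k. 0 \<le> iter a n k" and sf: "summable (iter a n)" and s1: "suminf (iter a n) = 1"
    using iter_real[OF an sa, of n] by (auto simp: sums_iff)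
  have "(\<lambda>k. of_real (comp_coeff a (iter a n) k) * z ^ k) sums
      (\<Sum>i. of_real (a i) * (\<Sum>k. of_real (iter a n k) * z ^ k) ^ i)"
    by (rule comp_coeff_sums[OF an sa' nn sf]) (use s1 z in auto)
  then show ?case using Suc by (simp add: sums_iff Pc_def)
qed



lemma Pc_norm_summable:
  fixes w :: "'a::{real_normed_field,banach}"
  assumes an: "\<And>i. 0 \<le> a i" and sa: "a sums 1" and w: "norm w \<le> 1"
  shows "summable (\<lambda>i. norm (of_real (a i) * w ^ i))"
  using powser_norm_summable[OF an _ w] sa by (auto simp: sums_iff)

lemma Pc_norm_le:
  fixes w :: "'a::{real_normed_field,banach}"
  assumes an: "\<And>i. 0 \<le> a i" and sa: "a sums 1" and w: "norm w \<le> 1"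
  shows "norm (Pc a w) \<le> Pc a (norm w)"
proof -
  have "norm (Pc a w) \<le> (\<Sum>i. norm (of_real (a i) * w ^ i))"
    unfolding Pc_def by (rule summable_norm[OF Pc_norm_summable[OF an sa w]])
  also have "\<dots> = Pc a (norm w)" using an by (simp add: Pc_def norm_mult norm_power)
  finally show ?thesis .
qed

lemma Pc_real_summable:
  fixes a :: "nat \<Rightarrow> real" and u :: real
  assumes an: "\<And>i. 0 \<le> a i" and sa: "a sums 1" and u: "0 \<le> u" "u \<le> 1"
  shows "summable (\<lambda>i. a i * u ^ i)"
proof -
  have "summable (\<lambda>i. norm (of_real (a i) * u ^ i))"
    by (rule Pc_norm_summable[where a=a]) (use an sa u in auto)
  then show ?thesis using summable_norm_cancel by fastforce
qed

lemma Pc_mono: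
  assumes an: "\<And>i. 0 \<le> a i" and sa: "a sums 1" and u: "0 \<le> u" "u \<le> v" "v \<le> 1"
  shows "Pc a u \<le> Pc a (v::real)"
  unfolding Pc_def using u an
  by (auto intro!: suminf_le Pc_real_summable[OF an sa] mult_left_mono power_mono)

lemma Pc_le1:
  assumes an: "\<And>i. 0 \<le> a i" and sa: "a sums 1" and u: "0 \<le> u" "u \<le> 1"
  shows "Pc a u \<le> (1::real)"
proof -
  have "Pc a u \<le> Pc a 1" by (rule Pc_mono[OF an sa u(1) u(2)]) simp
  also have "\<dots> = 1" using sa by (simp add: Pc_def sums_iff)
  finally show ?thesis .
qed

lemma Pc_nonneg:
  assumes an: "\<And>i. 0 \<le> a i" and sa: "a sums 1" and u: "0 \<le> u" "u \<le> 1"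
  shows "0 \<le> Pc a (u::real)"
  unfolding Pc_def using u an by (auto intro!: suminf_nonneg Pc_real_summable[OF an sa])

lemma Pc_of_real:
  assumes an: "\<And>i. 0 \<le> a i" and sa: "a sums 1" and u: "0 \<le> u" "u \<le> 1"
  shows "Pc a (of_real u :: 'a::{real_normed_field,banach}) = of_real (Pc a u)"
  unfolding Pc_def using suminf_of_real[OF Pc_real_summable[OF an sa u], where 'a='a]
  by simp

lemma iter_zero:
  assumes an: "\<And>i. 0 \<le> a i" and sa: "a sums 1"
  shows "iter a n 0 = (Pc a ^^ n) (0::real)"
proof -
  have "(\<lambda>k. of_real (iter a n k) * (0::real) ^ k) sums ((Pc a ^^ n) 0)"
    by (rule iter_sums[OF an sa]) simp
  then show ?thesis by (simp add: sums_iff)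
qed

lemma mass_bound:
  fixes z :: complex
  assumes an: "\<And>i. 0 \<le> a i" and sa: "a sums 1" and z: "norm z \<le> 1"
  shows "norm ((Pc a ^^ n) z - of_real (iter a n 0)) \<le> 1 - iter a n 0"
proof -
  have nn: "\<And>k. 0 \<le> iter a n k" and s: "iter a n sums 1" using iter_real[OF an sa, of n] by auto
  define c where "c = (\<lambda>k. of_real (iter a n k) * z ^ k - (if k = 0 then of_real (iter a n 0) else 0))"
  define d where "d = (\<lambda>k. iter a n k - (if k = 0 then iter a n 0 else 0))"
  have cs: "c sums ((Pc a ^^ n) z - of_real (iter a n 0))"
  proof -
    have "c = (\<lambda>k. of_real (iter a n k) * z ^ k - (if k = 0 then of_real (iter a n k) else 0))"
      by (auto simp: c_def)
    then show ?thesis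
      using sums_diff[OF iter_sums[OF an sa z, of n] sums_single[of 0 "\<lambda>k. of_real (iter a n k) :: complex"]]
      by simp
  qed
  have ds: "d sums (1 - iter a n 0)"
  proof -
    have "d = (\<lambda>k. iter a n k - (if k = 0 then iter a n k else 0))"
      by (auto simp: d_def)
    then show ?thesis
      using sums_diff[OF s sums_single[of 0 "\<lambda>k. iter a n k"]] by simp
  qed
  have cd: "norm (c k) \<le> d k" for k
  proof (cases "k = 0")
    case False
    have "norm (c k) = iter a n k * norm z ^ k" using False nn by (simp add: c_def norm_mult norm_power)
    also have "\<dots> \<le> iter a n k * 1" using nn z by (intro mult_left_mono power_le_one) auto
    finally show ?thesis using False by (simp add: d_def)
  qed (simp add: c_def d_def)
  have ns: "summable (\<lambda>k. norm (c k))"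
    using ds cd by (auto intro!: summable_comparison_test'[where g=d] simp: sums_iff)
  have "norm (suminf c) \<le> (\<Sum>k. norm (c k))" by (rule summable_norm[OF ns])
  also have "\<dots> \<le> suminf d" by (rule suminf_le[OF cd ns]) (use ds in \<open>auto simp: sums_iff\<close>)
  finally show ?thesis using cs ds by (simp add: sums_iff)
qed

lemma xseq_bounds:
  fixes a :: "nat \<Rightarrow> real"
  assumes an: "\<And>i. 0 \<le> a i" and sa: "a sums 1"
  shows "0 \<le> (Pc a ^^ n) (0::real) \<and> (Pc a ^^ n) 0 \<le> (Pc a ^^ Suc n) (0::real) \<and> (Pc a ^^ Suc n) (0::real) \<le> 1"
proof (induction n)
  case 0
  then show ?case using Pc_nonneg[OF an sa, of 0] Pc_le1[OF an sa, of 0] by simp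
next
  case (Suc n)
  then show ?case using Pc_mono[OF an sa, of "(Pc a ^^ n) 0" "(Pc a ^^ Suc n) 0"]
      Pc_le1[OF an sa, of "(Pc a ^^ Suc n) 0"] by auto
qed

lemma xseq_conv:
  fixes a :: "nat \<Rightarrow> real"
  assumes an: "\<And>i. 0 \<le> a i" and sa: "a sums 1"
  shows "(\<lambda>n. iter a n 0) \<longlonglongrightarrow> lim (\<lambda>n. iter a n 0)"
    and "0 \<le> lim (\<lambda>n. iter a n 0)" "lim (\<lambda>n. iter a n 0) \<le> 1"
    and "\<And>n. iter a n 0 \<le> lim (\<lambda>n. iter a n 0)"
proof -
  have x: "\<And>n. iter a n 0 = (Pc a ^^ n) 0" by (rule iter_zero[OF an sa])
  have inc: "incseq (\<lambda>n. iter a n 0)" unfolding x using xseq_bounds[OF an sa]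
    by (intro incseq_SucI) auto
  have b: "\<forall>i. iter a i 0 \<le> 1"
  proof
    fix i show "iter a i 0 \<le> 1" unfolding x using xseq_bounds[OF an sa, of i] by (cases i) auto
  qed
  obtain L where L: "(\<lambda>n. iter a n 0) \<longlonglongrightarrow> L" "\<forall>i. iter a i 0 \<le> L"
    using incseq_convergent[OF inc b] by blast
  have lim: "lim (\<lambda>n. iter a n 0) = L" using L(1) by (rule limI)
  show "(\<lambda>n. iter a n 0) \<longlonglongrightarrow> lim (\<lambda>n. iter a n 0)" using L lim by simp
  show "\<And>n. iter a n 0 \<le> lim (\<lambda>n. iter a n 0)" using L lim by simp
  show "0 \<le> lim (\<lambda>n. iter a n 0)" using L(2) lim by (metis iter.simps(1) zero_neq_one)
  show "lim (\<lambda>n. iter a n 0) \<le> 1" using L(1) b lim by (auto intro: LIMSEQ_le_const2)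
qed

lemma fixpt:
  fixes a :: "nat \<Rightarrow> real"
  assumes an: "\<And>i. 0 \<le> a i" and sa: "a sums 1" and lt: "lim (\<lambda>n. iter a n 0) < 1"
  shows "Pc a (lim (\<lambda>n. iter a n 0)) = lim (\<lambda>n. iter a n 0)"
proof -
  define L where "L = lim (\<lambda>n. iter a n 0)"
  have x: "\<And>n. iter a n 0 = (Pc a ^^ n) 0" by (rule iter_zero[OF an sa])
  have c: "(\<lambda>n. iter a n 0) \<longlonglongrightarrow> L" using xseq_conv(1)[OF an sa] L_def by simp
  have L0: "0 \<le> L" using xseq_conv(2)[OF an sa] L_def by simp
  have "isCont (\<lambda>x. \<Sum>n. a n * x ^ n) L"
    by (rule isCont_powser[where K=1]) (use sa lt L0 L_def in \<open>auto simp: sums_iff\<close>)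
  moreover have "Pc a = (\<lambda>x::real. \<Sum>n. a n * x ^ n)" by (rule ext) (simp add: Pc_def)
  ultimately have "isCont (Pc a) L" by simp
  then have "(\<lambda>n. Pc a (iter a n 0)) \<longlonglongrightarrow> Pc a L" using c by (rule isCont_tendsto_compose)
  moreover have "(\<lambda>n. Pc a (iter a n 0)) = (\<lambda>n. iter a (Suc n) 0)" unfolding x by auto
  moreover have "(\<lambda>n. iter a (Suc n) 0) \<longlonglongrightarrow> L" using c by (rule LIMSEQ_Suc)
  ultimately show ?thesis using L_def LIMSEQ_unique by metis
qed

lemma contraction_conv:
  fixes a :: "nat \<Rightarrow> real" and w0 :: complex and al :: real
  assumes an: "\<And>i. 0 \<le> a i" and sa: "a sums 1" and alt: "\<And>i. a i < 1"
    and al0: "0 \<le> al" and al1: "al < 1" and fp: "Pc a al = al" and w0: "norm w0 < 1"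
  shows "(\<lambda>n. (Pc a ^^ n) w0) \<longlonglongrightarrow> of_real al"
proof -
  have sa': "summable a" using sa by (simp add: sums_iff)
  have sa1: "suminf a = 1" using sa by (simp add: sums_iff)
  define g where "g i u = (\<Sum>j<i. al ^ (i - Suc j) * u ^ j)" for i and u :: real
  have g_mono: "g i u \<le> g i v" if "0 \<le> u" "u \<le> v" for i u v
    unfolding g_def using that al0 by (intro sum_mono mult_left_mono power_mono) auto
  have g_nonneg: "0 \<le> g i u" if "0 \<le> u" for i u
    unfolding g_def using that al0 by (intro sum_nonneg) auto
  have g1: "(1 - al) * g i 1 = 1 - al ^ i" for i
    using power_diff_sumr2[of 1 i al] by (simp add: g_def)
  have gle: "a i * g i u \<le> a i / (1 - al)" if "0 \<le> u" "u \<le> 1" for i u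
  proof -
    have "g i u \<le> g i 1" using g_mono that by auto
    also have "g i 1 = (1 - al ^ i) / (1 - al)" using g1[of i] al1 by (simp add: field_simps)
    also have "\<dots> \<le> 1 / (1 - al)" using al0 al1 by (intro divide_right_mono) auto
    finally show ?thesis using an[of i] by (simp add: mult_left_mono divide_inverse)
  qed
  have Ds: "summable (\<lambda>i. a i * g i u)" if "0 \<le> u" "u \<le> 1" for u
  proof (rule summable_comparison_test'[OF summable_divide[OF sa', of "1 - al"]])
    fix i show "norm (a i * g i u) \<le> a i / (1 - al)"
      using gle[OF that] an[of i] g_nonneg[OF that(1)] by simp
  qed
  define D where "D u = (\<Sum>i. a i * g i u)" for u
  have D_mono: "D u \<le> D v" if "0 \<le> u" "u \<le> v" "v \<le> 1" for u v
    unfolding D_def using that Ds g_mono an by (intro suminf_le mult_left_mono) auto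
  have D_nonneg: "0 \<le> D u" if "0 \<le> u" "u \<le> 1" for u
    unfolding D_def using that Ds g_nonneg an by (intro suminf_nonneg) auto
  have spa: "summable (\<lambda>i. a i * al ^ i)" using Pc_real_summable[OF an sa al0] al1 by simp
  have Pid: "Pc a u - al = (u - al) * D u" if "0 \<le> u" "u \<le> 1" for u
  proof -
    have spu: "summable (\<lambda>i. a i * u ^ i)" using Pc_real_summable[OF an sa that] .
    have "Pc a u - al = Pc a u - Pc a al" using fp by simp
    also have "\<dots> = (\<Sum>i. a i * u ^ i - a i * al ^ i)" unfolding Pc_def
      using suminf_diff[OF spu spa] by simp
    also have "\<dots> = (\<Sum>i. (u - al) * (a i * g i u))"
      using power_diff_sumr2[of u _ al] by (simp add: g_def right_diff_distrib[symmetric] mult_ac)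
    also have "\<dots> = (u - al) * D u" unfolding D_def by (rule suminf_mult[OF Ds[OF that]])
    finally show ?thesis .
  qed
  have D1: "D 1 = 1"
  proof -
    have "(1 - al) * D 1 = (\<Sum>i. (1 - al) * (a i * g i 1))"
      unfolding D_def by (rule suminf_mult[symmetric, OF Ds]) auto
    also have "\<dots> = (\<Sum>i. a i - a i * al ^ i)"
      using g1 by (simp add: mult_ac right_diff_distrib)
    also have "\<dots> = 1 - al" using suminf_diff[OF sa' spa] sa1 fp by (simp add: Pc_def)
    finally show ?thesis using al1 by simp
  qed
  have "\<exists>k. 2 \<le> k \<and> 0 < a k"
  proof (rule ccontr)
    assume "\<not> (\<exists>k. 2 \<le> k \<and> 0 < a k)"
    then have z: "\<And>k. 2 \<le> k \<Longrightarrow> a k = 0" using an by (metis not_le order.antisym)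
    have fin: "\<And>u::real. (\<Sum>i. a i * u ^ i) = a 0 + a 1 * u"
    proof -
      fix u :: real
      have "(\<Sum>i. a i * u ^ i) = (\<Sum>i\<in>{0,1}. a i * u ^ i)"
        by (rule suminf_finite) (auto intro: z)
      then show "(\<Sum>i. a i * u ^ i) = a 0 + a 1 * u" by simp
    qed
    have "a 0 + a 1 = 1" using fin[of 1] sa1 by simp
    moreover have "a 0 + a 1 * al = al" using fin[of al] fp by (simp add: Pc_def)
    ultimately have "a 0 = al * (1 - a 1)" "1 - a 1 = a 0" by (simp_all add: algebra_simps)
    then have "a 0 = al * a 0" by simp
    then have "a 0 * (1 - al) = 0" by (simp add: algebra_simps)
    then have "a 0 = 0" using al1 by simp
    then show False using \<open>a 0 + a 1 = 1\<close> alt[of 1] by simp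
  qed
  then obtain k where k: "2 \<le> k" "0 < a k" by blast
  have Dlt: "D u < 1" if "0 \<le> u" "u < 1" for u
  proof -
    have "1 - D u = D 1 - D u" using D1 by simp
    also have "\<dots> = (\<Sum>i. a i * g i 1 - a i * g i u)"
      unfolding D_def using Ds that by (intro suminf_diff) auto
    also have "\<dots> > 0"
    proof (rule suminf_pos2[where i=k])
      show "summable (\<lambda>i. a i * g i 1 - a i * g i u)" using Ds that by (intro summable_diff) auto
      show "0 \<le> a i * g i 1 - a i * g i u" for i
        using g_mono[of u 1 i] that an[of i] by (simp add: mult_left_mono flip: right_diff_distrib)
      have "g k 1 - g k u = (\<Sum>j<k. al ^ (k - Suc j) * (1 - u ^ j))"
        by (simp add: g_def sum_subtractf[symmetric] right_diff_distrib)
      also have "\<dots> > 0"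
      proof (rule sum_pos2[where i="k - 1"])
        show "k - 1 \<in> {..<k}" using k by auto
        have "u ^ (k - 1) < 1" using that k by (subst power_less_one_iff) auto
        then show "0 < al ^ (k - Suc (k - 1)) * (1 - u ^ (k - 1))" using k by simp
        show "\<And>j. j \<in> {..<k} \<Longrightarrow> 0 \<le> al ^ (k - Suc j) * (1 - u ^ j)"
          using al0 that by (auto intro!: mult_nonneg_nonneg power_le_one)
      qed simp
      finally show "0 < a k * g k 1 - a k * g k u" using k by (simp flip: right_diff_distrib)
    qed
    finally show ?thesis by simp
  qed
  have cbound: "norm (Pc a w - of_real al) \<le> norm (w - of_real al) * D (norm w)" if "norm w \<le> 1" for w :: complex
  proof -
    have t: "norm (of_real (a i) * (w ^ i - of_real al ^ i)) \<le> a i * (norm (w - of_real al) * g i (norm w))" for i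
    proof -
      have "norm (w ^ i - of_real al ^ i) = norm (w - of_real al) * norm (\<Sum>j<i. of_real al ^ (i - Suc j) * w ^ j)"
        by (simp add: power_diff_sumr2[of w i "of_real al"] norm_mult)
      also have "\<dots> \<le> norm (w - of_real al) * g i (norm w)"
      proof (rule mult_left_mono)
        have "norm (\<Sum>j<i. of_real al ^ (i - Suc j) * w ^ j) \<le> (\<Sum>j<i. norm (of_real al ^ (i - Suc j) * w ^ j))"
          by (rule norm_sum)
        also have "\<dots> = g i (norm w)" using al0 by (simp add: g_def norm_mult norm_power)
        finally show "norm (\<Sum>j<i. of_real al ^ (i - Suc j) * w ^ j) \<le> g i (norm w)" .
      qed simp
      finally show ?thesis using an[of i] by (simp add: norm_mult mult_left_mono)
    qed
    have sm: "summable (\<lambda>i. a i * (norm (w - of_real al) * g i (norm w)))"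
      using summable_mult[OF Ds[of "norm w"], of "norm (w - of_real al)"] that
      by (simp add: mult_ac)
    have sn: "summable (\<lambda>i. norm (of_real (a i) * (w ^ i - of_real al ^ i)))"
      by (rule summable_comparison_test'[OF sm]) (use t in auto)
    have "Pc a w - of_real al = Pc a w - Pc a (of_real al)"
      using Pc_of_real[OF an sa al0, where 'a=complex] al1 fp by simp
    also have "\<dots> = (\<Sum>i. of_real (a i) * (w ^ i - of_real al ^ i))"
      unfolding Pc_def
      using suminf_diff[OF summable_norm_cancel[OF Pc_norm_summable[OF an sa that]]
          summable_norm_cancel[OF Pc_norm_summable[OF an sa, of "of_real al :: complex"]]] al0 al1
      by (simp add: right_diff_distrib)
    finally have "norm (Pc a w - of_real al) \<le> (\<Sum>i. norm (of_real (a i) * (w ^ i - of_real al ^ i)))"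
      using summable_norm[OF sn] by simp
    also have "\<dots> \<le> (\<Sum>i. a i * (norm (w - of_real al) * g i (norm w)))"
      by (rule suminf_le[OF t sn sm])
    also have "\<dots> = norm (w - of_real al) * D (norm w)"
      unfolding D_def using suminf_mult[OF Ds[of "norm w"], of "norm (w - of_real al)"] that
      by (simp add: mult_ac)
    finally show ?thesis .
  qed
  define u1 where "u1 = max (norm w0) al"
  have u1: "0 \<le> u1" "u1 < 1" "al \<le> u1" "norm w0 \<le> u1" using w0 al1 al0 by (auto simp: u1_def)
  define \<kappa> where "\<kappa> = D u1"
  have \<kappa>: "0 \<le> \<kappa>" "\<kappa> < 1" using D_nonneg Dlt u1 by (auto simp: \<kappa>_def)
  have inv: "norm (Pc a w) \<le> u1" if "norm w \<le> u1" for w :: complex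
  proof -
    have "norm (Pc a w) \<le> Pc a (norm w)" using Pc_norm_le[OF an sa, of w] that u1 by simp
    also have "\<dots> \<le> Pc a u1" using Pc_mono[OF an sa] that u1 by simp
    also have "\<dots> = al + (u1 - al) * \<kappa>" using Pid[of u1] u1 by (simp add: \<kappa>_def)
    also have "\<dots> \<le> al + (u1 - al) * 1" using u1 \<kappa> by (intro add_left_mono mult_left_mono) auto
    finally show ?thesis by simp
  qed
  have step: "norm (Pc a w - of_real al) \<le> \<kappa> * norm (w - of_real al)" if "norm w \<le> u1" for w :: complex
  proof -
    have "norm (Pc a w - of_real al) \<le> norm (w - of_real al) * D (norm w)" using cbound that u1 by simp
    also have "\<dots> \<le> norm (w - of_real al) * \<kappa>" unfolding \<kappa>_def
      using D_mono that u1 by (intro mult_left_mono) auto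
    finally show ?thesis by (simp add: mult_ac)
  qed
  have ind: "norm ((Pc a ^^ n) w0) \<le> u1 \<and> norm ((Pc a ^^ n) w0 - of_real al) \<le> \<kappa> ^ n * norm (w0 - of_real al)" for n
  proof (induction n)
    case 0 then show ?case using u1 by simp
  next
    case (Suc n)
    have "norm ((Pc a ^^ Suc n) w0 - of_real al) \<le> \<kappa> * norm ((Pc a ^^ n) w0 - of_real al)"
      using step Suc by simp
    also have "\<dots> \<le> \<kappa> * (\<kappa> ^ n * norm (w0 - of_real al))" using Suc \<kappa> by (intro mult_left_mono) auto
    finally show ?case using inv Suc by (simp add: mult_ac)
  qed
  have "(\<lambda>n. \<kappa> ^ n * norm (w0 - of_real al)) \<longlonglongrightarrow> 0"
    using \<kappa> by (intro tendsto_mult_left_zero LIMSEQ_power_zero) auto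
  then have "(\<lambda>n. (Pc a ^^ n) w0 - of_real al) \<longlonglongrightarrow> 0"
    by (rule Lim_null_comparison[rotated]) (use ind in auto)
  then show ?thesis by (simp add: LIM_zero_iff)
qed

lemma Re_eq_cmod_imp: "Re z = cmod z \<Longrightarrow> z = of_real (cmod z)"
proof -
  assume h: "Re z = cmod z"
  have "(Im z)^2 = 0" using cmod_power2[of z] h by simp
  then have "Im z = 0" by simp
  then show ?thesis using h by (simp add: complex_eq_iff)
qed

lemma strict_lt1:
  fixes a :: "nat \<Rightarrow> real" and \<zeta> :: complex
  assumes an: "\<And>i. 0 \<le> a i" and sa: "a sums 1" and nz: "norm \<zeta> = 1"
    and i12: "0 < a i1" "0 < a i2" "\<zeta> ^ i1 \<noteq> \<zeta> ^ i2"
  shows "norm (Pc a \<zeta>) < 1"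
proof (cases "Pc a \<zeta> = 0")
  case True then show ?thesis by simp
next
  case False
  define S where "S = Pc a \<zeta>"
  have S0: "S \<noteq> 0" using False S_def by simp
  have ss: "summable (\<lambda>i. of_real (a i) * \<zeta> ^ i :: complex)"
    using summable_norm_cancel[OF Pc_norm_summable[OF an sa, of \<zeta>]] nz by simp
  have "(\<lambda>i. cnj S * (of_real (a i) * \<zeta> ^ i)) sums (cnj S * S)"
    unfolding S_def Pc_def by (rule sums_mult[OF summable_sums[OF ss]])
  then have "(\<lambda>i. Re (cnj S * (of_real (a i) * \<zeta> ^ i))) sums Re (cnj S * S)"
    by (rule bounded_linear.sums[OF bounded_linear_Re])
  moreover have "Re (cnj S * S) = (norm S)^2" by (simp add: complex_mult_cnj cmod_def power2_eq_square)
  moreover have "(\<lambda>i. Re (cnj S * (of_real (a i) * \<zeta> ^ i))) = (\<lambda>i. a i * Re (cnj S * \<zeta> ^ i))"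
    by (rule ext) (simp add: algebra_simps)
  ultimately have r: "(\<lambda>i. a i * Re (cnj S * \<zeta> ^ i)) sums (norm S)^2"
    by simp
  have nu: "norm (cnj S * \<zeta> ^ i) = norm S" for i using nz by (simp add: norm_mult norm_power)
  define t where "t i = a i * (norm S - Re (cnj S * \<zeta> ^ i))" for i
  have ts: "t sums (norm S - (norm S)^2)"
  proof -
    have "(\<lambda>i. a i * norm S - a i * Re (cnj S * \<zeta> ^ i)) sums (1 * norm S - (norm S)^2)"
      by (rule sums_diff[OF sums_mult2[OF sa] r])
    moreover have "t = (\<lambda>i. a i * norm S - a i * Re (cnj S * \<zeta> ^ i))"
      by (rule ext) (simp only: t_def right_diff_distrib)
    ultimately show ?thesis by simp
  qed
  have tn: "0 \<le> t i" for i
    unfolding t_def using an[of i] complex_Re_le_cmod[of "cnj S * \<zeta> ^ i"] nu[of i] by simp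
  have "\<exists>i0. 0 < t i0"
  proof (rule ccontr)
    assume "\<not> (\<exists>i0. 0 < t i0)"
    then have "t i1 \<le> 0" "t i2 \<le> 0" by (auto simp: not_less)
    then have "Re (cnj S * \<zeta> ^ i1) = cmod (cnj S * \<zeta> ^ i1)" "Re (cnj S * \<zeta> ^ i2) = cmod (cnj S * \<zeta> ^ i2)"
      using i12 complex_Re_le_cmod nu unfolding t_def
      by (smt (verit) mult_pos_pos)+
    then have "cnj S * \<zeta> ^ i1 = of_real (norm S)" "cnj S * \<zeta> ^ i2 = of_real (norm S)"
      using Re_eq_cmod_imp nu by metis+
    then have "cnj S * \<zeta> ^ i1 = cnj S * \<zeta> ^ i2" by simp
    then show False using S0 i12 by simp
  qed
  then obtain i0 where "0 < t i0" by blast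
  then have "0 < suminf t" using ts tn by (intro suminf_pos2[where i=i0]) (auto simp: sums_iff)
  then have "0 < norm S * (1 - norm S)" using ts by (simp add: sums_iff power2_eq_square algebra_simps)
  then show ?thesis using S_def by (simp add: zero_less_mult_iff)
qed



definition ee :: "nat \<Rightarrow> int \<Rightarrow> complex" where
  "ee m x = cis (2 * pi * of_int x / of_nat m)"

lemma ee_add: "ee m (x + y) = ee m x * ee m y"
  by (simp add: ee_def cis_mult add_divide_distrib distrib_left)

lemma ee_zero[simp]: "ee m 0 = 1" by (simp add: ee_def)

lemma norm_ee[simp]: "norm (ee m x) = 1" by (simp add: ee_def)

lemma ee_minus: "ee m (- x) = inverse (ee m x)"
proof -
  have "ee m (- x) = cis (- (2 * pi * of_int x / of_nat m))" by (simp add: ee_def)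
  then show ?thesis by (simp add: ee_def)
qed

lemma ee_pow: "ee m x ^ n = ee m (int n * x)"
  by (induction n) (simp_all add: ee_add distrib_right)

lemma ee_eq_1: assumes "0 < m" shows "ee m x = 1 \<longleftrightarrow> int m dvd x"
proof -
  have "ee m x = exp (\<i> * complex_of_real (2 * pi * of_int x / of_nat m))"
    by (simp add: ee_def cis_conv_exp)
  then have "ee m x = 1 \<longleftrightarrow> (\<exists>n::int. 2 * pi * of_int x / of_nat m = of_int (2 * n) * pi)"
    by (simp add: exp_eq_1)
  also have "\<dots> \<longleftrightarrow> (\<exists>n::int. of_int x = of_nat m * (of_int n :: real))"
    using assms by (auto simp: field_simps)
  also have "\<dots> \<longleftrightarrow> (\<exists>n::int. x = int m * n)"
    by (metis of_int_eq_iff of_int_mult of_int_of_nat_eq)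
  finally show ?thesis by (auto simp: dvd_def)
qed

lemma ee_mult_m: assumes "0 < m" shows "ee m (int m * k) = 1"
  using ee_eq_1[OF assms] by simp

lemma ee_mod: assumes "0 < m" shows "ee m x = ee m (x mod int m)"
proof -
  have "x = x mod int m + int m * (x div int m)" by simp
  then have "ee m x = ee m (x mod int m) * ee m (int m * (x div int m))" by (metis ee_add)
  then show ?thesis using ee_mult_m[OF assms] by simp
qed

lemma ee_cong: assumes "0 < m" "x mod int m = y mod int m" shows "ee m x = ee m y"
  using ee_mod[OF assms(1), of x] ee_mod[OF assms(1), of y] assms(2) by simp

definition dft :: "nat \<Rightarrow> (int \<Rightarrow> real) \<Rightarrow> int \<Rightarrow> complex" where
  "dft m x j = (\<Sum>l\<in>{0..<int m}. of_real (x l) * ee m (j * l))"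

lemma regroup:
  assumes m: "0 < m" and nn: "\<And>k. 0 \<le> b k" and sb: "summable b"
  shows "(\<lambda>k. of_real (b k) * ee m j ^ k) sums dft m (ev_Cm m b) j"
proof -
  define c where "c l k = (if int k mod int m = l then b k else 0)" for l k
  have cs: "summable (c l)" for l
    by (rule summable_comparison_test'[OF sb]) (use nn in \<open>auto simp: c_def\<close>)
  have eq: "of_real (b k) * ee m j ^ k = (\<Sum>l\<in>{0..<int m}. of_real (c l k) * ee m (j * l))" for k
  proof -
    have "(\<Sum>l\<in>{0..<int m}. of_real (c l k) * ee m (j * l))
        = (\<Sum>l\<in>{0..<int m}. if int k mod int m = l then of_real (b k) * ee m (j * (int k mod int m)) else 0)"
      by (rule sum.cong) (auto simp: c_def)
    also have "\<dots> = of_real (b k) * ee m (j * (int k mod int m))"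
      using m by (simp add: sum.delta')
    also have "ee m (j * (int k mod int m)) = ee m j ^ k"
      unfolding ee_pow using m by (intro ee_cong) (auto simp: mod_mult_right_eq mult.commute)
    finally show ?thesis by simp
  qed
  have "(\<lambda>k. \<Sum>l\<in>{0..<int m}. of_real (c l k) * ee m (j * l)) sums (\<Sum>l\<in>{0..<int m}. of_real (suminf (c l)) * ee m (j * l))"
    by (rule sums_sum, rule sums_mult2, rule sums_of_real, rule summable_sums[OF cs])
  moreover have "(\<Sum>l\<in>{0..<int m}. of_real (suminf (c l)) * ee m (j * l)) = dft m (ev_Cm m b) j"
    unfolding dft_def ev_Cm_def c_def by (rule sum.cong) auto
  ultimately show ?thesis using eq by simp
qed

lemma orth:
  assumes m: "0 < m" and l: "l \<in> {0..<int m}" and l': "l' \<in> {0..<int m}"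
  shows "(\<Sum>j\<in>{0..<int m}. ee m (j * (l' - l))) = (if l' = l then of_nat m else 0)"
proof -
  have "(\<Sum>j\<in>{0..<int m}. ee m (j * (l' - l))) = (\<Sum>j\<in>{0..<m}. ee m (int j * (l' - l)))"
  proof -
    have "{0..<int m} = int ` {0..<m}" by (simp add: image_int_atLeastLessThan)
    then show ?thesis by (simp add: sum.reindex)
  qed
  also have "\<dots> = (\<Sum>j<m. ee m (l' - l) ^ j)" by (simp add: ee_pow atLeast0LessThan)
  also have "\<dots> = (if l' = l then of_nat m else 0)"
  proof (cases "l' = l")
    case True then show ?thesis by simp
  next
    case False
    have "\<not> int m dvd (l' - l)"
    proof
      assume "int m dvd (l' - l)"
      then obtain t where t: "l' - l = int m * t" by (auto simp: dvd_def)
      have "\<bar>l' - l\<bar> < int m" using l l' by auto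
      then have "t = 0" using t m by (cases "t = 0") (auto simp: abs_mult)
      then show False using t False by simp
    qed
    then have ne: "ee m (l' - l) \<noteq> 1" using ee_eq_1[OF m] by simp
    have "ee m (l' - l) ^ m = 1" using ee_pow ee_mult_m[OF m] by simp
    then show ?thesis using geometric_sum[OF ne, of m] False by simp
  qed
  finally show ?thesis .
qed

lemma dft_inv:
  assumes m: "0 < m" and l: "l \<in> {0..<int m}"
  shows "(\<Sum>j\<in>{0..<int m}. dft m x j * ee m (- (j * l))) = of_nat m * of_real (x l)"
proof -
  have "(\<Sum>j\<in>{0..<int m}. dft m x j * ee m (- (j * l)))
      = (\<Sum>j\<in>{0..<int m}. \<Sum>l'\<in>{0..<int m}. of_real (x l') * ee m (j * (l' - l)))"
  proof (rule sum.cong[OF refl])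
    fix j
    have "ee m (j * l') * ee m (- (j * l)) = ee m (j * (l' - l))" for l'
      by (simp add: ee_add[symmetric] right_diff_distrib)
    then show "dft m x j * ee m (- (j * l)) = (\<Sum>l'\<in>{0..<int m}. of_real (x l') * ee m (j * (l' - l)))"
      unfolding dft_def sum_distrib_right by (simp add: mult.assoc)
  qed
  also have "\<dots> = (\<Sum>l'\<in>{0..<int m}. of_real (x l') * (\<Sum>j\<in>{0..<int m}. ee m (j * (l' - l))))"
    by (subst sum.swap) (simp add: sum_distrib_left)
  also have "\<dots> = (\<Sum>l'\<in>{0..<int m}. if l' = l then of_real (x l) * of_nat m else 0)"
    by (rule sum.cong[OF refl]) (use orth[OF m l] in auto)
  also have "\<dots> = of_nat m * of_real (x l)" using l by (simp add: mult.commute)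
  finally show ?thesis .
qed

lemma conv_from_dft:
  assumes m: "0 < m" and c: "\<And>j. j \<in> {0..<int m} \<Longrightarrow> (\<lambda>n. dft m (v n) j) \<longlonglongrightarrow> dft m y j"
    and l: "l \<in> {0..<int m}"
  shows "(\<lambda>n. v n l) \<longlonglongrightarrow> y l"
proof -
  have e: "of_real (x l) = (\<Sum>j\<in>{0..<int m}. dft m x j * ee m (- (j * l))) / of_nat m" for x
    using dft_inv[OF m l, of x] m by simp
  have "(\<lambda>n. (\<Sum>j\<in>{0..<int m}. dft m (v n) j * ee m (- (j * l))) / of_nat m)
      \<longlonglongrightarrow> (\<Sum>j\<in>{0..<int m}. dft m y j * ee m (- (j * l))) / of_nat m"
    using m by (intro tendsto_intros c) auto
  then have "(\<lambda>n. of_real (v n l) :: complex) \<longlonglongrightarrow> of_real (y l)"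
    by (simp only: e)
  then show ?thesis by (simp add: tendsto_of_real_iff)
qed

lemma dft_tendsto:
  assumes "\<And>l. (\<lambda>n. v n l) \<longlonglongrightarrow> L l"
  shows "(\<lambda>n. dft m (v n) j) \<longlonglongrightarrow> dft m L j"
  unfolding dft_def by (intro tendsto_intros assms)

definition Sg :: "nat \<Rightarrow> (nat \<Rightarrow> bool) \<Rightarrow> int set" where
  "Sg m P = {int q mod int m | q. P q}"

lemma Sg_sub: "0 < m \<Longrightarrow> Sg m P \<subseteq> carrier (integer_mod_group m)"
  by (auto simp: Sg_def carrier_integer_mod_group)

lemma Gsub: "0 < m \<Longrightarrow> subgroup (generate (integer_mod_group m) (Sg m P)) (integer_mod_group m)"
  using group.generate_is_subgroup[OF group_integer_mod_group Sg_sub] by simp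

lemma Gcarr: "0 < m \<Longrightarrow> generate (integer_mod_group m) (Sg m P) \<subseteq> {0..<int m}"
  using subgroup.subset[OF Gsub, of m P] by (simp add: carrier_integer_mod_group)

lemma G0: "0 < m \<Longrightarrow> 0 \<in> generate (integer_mod_group m) (Sg m P)"
  using generate.one[of "integer_mod_group m" "Sg m P"] by simp

lemma Gfin: "0 < m \<Longrightarrow> finite (generate (integer_mod_group m) (Sg m P))"
  using Gcarr finite_subset by blast

lemma Gadd: "0 < m \<Longrightarrow> x \<in> generate (integer_mod_group m) (Sg m P) \<Longrightarrow> y \<in> generate (integer_mod_group m) (Sg m P)
   \<Longrightarrow> (x + y) mod int m \<in> generate (integer_mod_group m) (Sg m P)"
  using subgroup.m_closed[OF Gsub[of m P], of x y] by simp

lemma Gneg: "0 < m \<Longrightarrow> x \<in> generate (integer_mod_group m) (Sg m P)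
   \<Longrightarrow> (- x) mod int m \<in> generate (integer_mod_group m) (Sg m P)"
  using subgroup.m_inv_closed[OF Gsub[of m P], of x] Gcarr[of m P]
  by (auto simp: carrier_integer_mod_group)

lemma Ggen: "P q \<Longrightarrow> int q mod int m \<in> generate (integer_mod_group m) (Sg m P)"
  by (rule generate.incl) (auto simp: Sg_def)

lemma dvd_mul_mod:
  fixes j x :: int
  assumes "M dvd j * x" shows "M dvd j * (x mod M)"
proof -
  have "j * (x mod M) = j * x - M * (j * (x div M))"
    by (simp add: minus_div_mult_eq_mod[symmetric] right_diff_distrib mult_ac)
  then show ?thesis using assms by simp
qed

lemma dvd_mul_mod_iff:
  fixes j x :: int
  shows "M dvd j * (x mod M) \<longleftrightarrow> M dvd j * x"
proof -
  have eq: "j * (x mod M) = j * x - M * (j * (x div M))"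
    by (simp add: minus_div_mult_eq_mod[symmetric] right_diff_distrib mult_ac)
  show ?thesis
  proof
    assume "M dvd j * (x mod M)"
    moreover have "j * x = j * (x mod M) + M * (j * (x div M))" using eq by simp
    ultimately show "M dvd j * x" by (metis dvd_add dvd_triv_left)
  next
    assume "M dvd j * x"
    then show "M dvd j * (x mod M)" using eq by (metis dvd_diff dvd_triv_left)
  qed
qed

lemma Gkill:
  assumes m: "0 < m" and tr: "\<forall>q. P q \<longrightarrow> int m dvd j * int q"
    and g: "g \<in> generate (integer_mod_group m) (Sg m P)"
  shows "int m dvd j * g"
  using g
proof (induction rule: generate.induct)
  case one then show ?case by simp
next
  case (incl h)
  then obtain q where q: "P q" "h = int q mod int m" by (auto simp: Sg_def)
  show ?case unfolding q(2) by (rule dvd_mul_mod) (use q tr in blast)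
next
  case (inv h)
  then obtain q where q: "P q" "h = int q mod int m" by (auto simp: Sg_def)
  then have hc: "h \<in> carrier (integer_mod_group m)" using m by (auto simp: carrier_integer_mod_group)
  have ie: "inv\<^bsub>integer_mod_group m\<^esub> h = (- h) mod int m" using hc by simp
  have hd: "int m dvd j * h" unfolding q(2) by (rule dvd_mul_mod) (use q tr in blast)
  have "int m dvd j * ((- h) mod int m)" by (rule dvd_mul_mod) (use hd in simp)
  then show ?case by (simp only: ie)
next
  case (eng h1 h2)
  have "int m dvd j * ((h1 + h2) mod int m)" by (rule dvd_mul_mod) (use eng in \<open>simp add: distrib_left\<close>)
  then show ?case by simp
qed

lemma Gsum:
  assumes m: "0 < m"
  shows "(\<Sum>g\<in>generate (integer_mod_group m) (Sg m P). ee m (j * g))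
       = (if \<forall>q. P q \<longrightarrow> int m dvd j * int q then of_nat (card (generate (integer_mod_group m) (Sg m P))) else 0)"
proof (cases "\<forall>q. P q \<longrightarrow> int m dvd j * int q")
  case True
  have "ee m (j * g) = 1" if "g \<in> generate (integer_mod_group m) (Sg m P)" for g
    using Gkill[OF m True that] ee_eq_1[OF m] by simp
  then show ?thesis using True by simp
next
  case False
  define G where "G = generate (integer_mod_group m) (Sg m P)"
  obtain q where q: "P q" "\<not> int m dvd j * int q" using False by blast
  define g0 where "g0 = int q mod int m"
  have g0G: "g0 \<in> G" unfolding g0_def G_def by (rule Ggen[where P=P, OF q(1)])
  have ne: "ee m (j * g0) \<noteq> 1" using q(2) ee_eq_1[OF m] unfolding g0_def
    by (simp add: dvd_mul_mod_iff)
  have gr: "x \<in> G \<Longrightarrow> 0 \<le> x \<and> x < int m" for x using Gcarr[OF m, of P] G_def by auto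
  have g0r: "0 \<le> g0" "g0 < int m" using gr[OF g0G] by auto
  have addG: "x \<in> G \<Longrightarrow> (x + g0) mod int m \<in> G" for x using Gadd[OF m] g0G G_def by simp
  have subG: "x \<in> G \<Longrightarrow> (x - g0) mod int m \<in> G" for x
  proof -
    assume x: "x \<in> G"
    have "(x + (- g0) mod int m) mod int m \<in> G" using Gadd[OF m] Gneg[OF m] x g0G G_def by simp
    moreover have "(x + (- g0) mod int m) mod int m = (x - g0) mod int m"
      by (simp add: mod_add_right_eq)
    ultimately show ?thesis by simp
  qed
  have inv1: "x \<in> G \<Longrightarrow> ((x - g0) mod int m + g0) mod int m = x" for x
  proof -
    assume x: "x \<in> G"
    have "((x - g0) mod int m + g0) mod int m = (x - g0 + g0) mod int m" by (rule mod_add_left_eq)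
    also have "\<dots> = x" using gr[OF x] by simp
    finally show ?thesis .
  qed
  have inv2: "x \<in> G \<Longrightarrow> ((x + g0) mod int m - g0) mod int m = x" for x
  proof -
    assume x: "x \<in> G"
    have "((x + g0) mod int m - g0) mod int m = (x + g0 - g0) mod int m" by (rule mod_diff_left_eq)
    also have "\<dots> = x" using gr[OF x] by simp
    finally show ?thesis .
  qed
  have "(\<Sum>g\<in>G. ee m (j * g)) = (\<Sum>g\<in>G. ee m (j * ((g + g0) mod int m)))"
    by (rule sum.reindex_bij_witness[where i="\<lambda>g. (g + g0) mod int m" and j="\<lambda>g. (g - g0) mod int m"])
       (simp_all add: inv1 inv2 addG subG)
  also have "\<dots> = (\<Sum>g\<in>G. ee m (j * g) * ee m (j * g0))"
  proof (rule sum.cong[OF refl])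
    fix g
    have "ee m (j * ((g + g0) mod int m)) = ee m (j * (g + g0))"
      by (rule ee_cong[OF m mod_mult_right_eq])
    then show "ee m (j * ((g + g0) mod int m)) = ee m (j * g) * ee m (j * g0)"
      by (simp add: distrib_left ee_add)
  qed
  also have "\<dots> = (\<Sum>g\<in>G. ee m (j * g)) * ee m (j * g0)" by (rule sum_distrib_right[symmetric])
  finally have "(\<Sum>g\<in>G. ee m (j * g)) * (1 - ee m (j * g0)) = 0"
    by (simp add: right_diff_distrib)
  then have "(\<Sum>g\<in>G. ee m (j * g)) = 0" using ne by simp
  then show ?thesis using False G_def by auto
qed

lemma Gsep:
  assumes m: "0 < m" and h: "\<And>j. (\<forall>q. P q \<longrightarrow> int m dvd j * int q) \<Longrightarrow> int m dvd j * x"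
  shows "x mod int m \<in> generate (integer_mod_group m) (Sg m P)"
proof -
  define G where "G = generate (integer_mod_group m) (Sg m P)"
  define D where "D = {y::int. y mod int m \<in> G}"
  have Dadd: "y \<in> D \<Longrightarrow> z \<in> D \<Longrightarrow> y + z \<in> D" for y z
    using Gadd[OF m, of "y mod int m" P "z mod int m"] unfolding D_def G_def by (simp add: mod_add_eq)
  have Dneg: "y \<in> D \<Longrightarrow> - y \<in> D" for y
    using Gneg[OF m, of "y mod int m" P] unfolding D_def G_def by (simp add: mod_minus_eq)
  have D0: "0 \<in> D" using G0[OF m] unfolding D_def G_def by simp
  have Dnat: "y \<in> D \<Longrightarrow> int n * y \<in> D" for y n
    by (induction n) (auto simp: D0 distrib_right intro: Dadd)
  have Dmul: "y \<in> D \<Longrightarrow> c * y \<in> D" for y c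
  proof (cases "c \<ge> 0")
    case True
    assume y: "y \<in> D"
    have "c = int (nat c)" using True by simp
    then show ?thesis using Dnat[OF y, of "nat c"] by metis
  next
    case False
    assume y: "y \<in> D"
    have "c = - int (nat (- c))" using False by simp
    then show ?thesis using Dneg[OF Dnat[OF y, of "nat (-c)"]] by (metis mult_minus_left)
  qed
  have Dm: "int m \<in> D" using D0 by (simp add: D_def)
  have Dq: "P q \<Longrightarrow> int q \<in> D" for q using Ggen[of P q m] by (simp add: D_def G_def)
  define h0 where "h0 = (LEAST n::nat. 0 < n \<and> int n \<in> D)"
  have ex: "0 < m \<and> int m \<in> D" using m Dm by simp
  have h0: "0 < h0" "int h0 \<in> D" using LeastI[of "\<lambda>n. 0 < n \<and> int n \<in> D", OF ex] h0_def by auto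
  have hdvd: "int h0 dvd y" if y: "y \<in> D" for y
  proof (rule ccontr)
    assume nd: "\<not> int h0 dvd y"
    have r: "y mod int h0 = y + (- (y div int h0)) * int h0" by (simp add: minus_div_mult_eq_mod[symmetric])
    have rD: "y mod int h0 \<in> D" unfolding r by (rule Dadd[OF y Dmul[OF h0(2)]])
    have rpos: "0 < y mod int h0" using nd h0(1)
      by (metis dvd_eq_mod_eq_0 of_nat_0_less_iff order_le_less pos_mod_sign)
    have rlt: "y mod int h0 < int h0" using h0(1) by simp
    have "0 < nat (y mod int h0) \<and> int (nat (y mod int h0)) \<in> D" using rpos rD by simp
    then have "h0 \<le> nat (y mod int h0)" unfolding h0_def by (rule Least_le)
    then show False using rlt rpos by linarith
  qed
  obtain s where s: "int m = int h0 * s" using hdvd[OF Dm] by (auto simp: dvd_def)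
  have spos: "0 < s" using s m h0(1) by (metis of_nat_0_less_iff zero_less_mult_pos)
  have "int m dvd s * x"
  proof (rule h, intro allI impI)
    fix q assume "P q"
    then obtain t where t: "int q = int h0 * t" using hdvd[OF Dq] by (auto simp: dvd_def)
    have "s * int q = int m * t" using s t by (simp add: mult_ac)
    then show "int m dvd s * int q" by simp
  qed
  then obtain u where u: "s * x = int m * u" by (auto simp: dvd_def)
  then have "s * x = s * (int h0 * u)" using s by (simp add: mult_ac)
  then have "x = int h0 * u" using spos by simp
  then have "x \<in> D" using Dmul[OF h0(2), of u] by (simp add: mult.commute)
  then show ?thesis by (simp add: D_def G_def)
qed



lemma tendsto_fun_iff:
  "(f \<longlongrightarrow> (l::'a\<Rightarrow>'b::topological_space)) F \<longleftrightarrow> (\<forall>i. ((\<lambda>n. f n i) \<longlongrightarrow> l i) F)"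
  using limitin_componentwise[of "\<lambda>i. euclidean" UNIV f l F]
  by (simp add: euclidean_product_topology limitin_canonical_iff)

lemma Pc_triv:
  fixes a :: "nat \<Rightarrow> real"
  assumes m: "0 < m" and sa: "a sums 1" and rb: "\<forall>i<r. a i = 0"
    and tr: "\<forall>q. a (r + q) \<noteq> 0 \<longrightarrow> int m dvd x * int q"
  shows "Pc a (ee m x) = ee m (x * int r)"
proof -
  have t: "of_real (a i) * ee m x ^ i = of_real (a i) * ee m x ^ r" for i
  proof (cases "i < r")
    case True then show ?thesis using rb by simp
  next
    case False
    then obtain q where q: "i = r + q" by (metis le_add_diff_inverse not_less)
    show ?thesis
    proof (cases "a (r + q) = 0")
      case True then show ?thesis using q by simp
    next
      case False
      then have "int m dvd x * int q" using tr by blast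
      then have "ee m x ^ q = 1" using ee_eq_1[OF m] by (simp add: ee_pow mult.commute)
      then show ?thesis using q by (simp add: power_add)
    qed
  qed
  have "Pc a (ee m x) = (\<Sum>i. of_real (a i) * ee m x ^ r)" unfolding Pc_def
    by (rule arg_cong[where f=suminf], rule ext, rule t)
  also have "\<dots> = of_real (suminf a) * ee m x ^ r"
  proof -
    have sm: "summable a" using sa by (simp add: sums_iff)
    have "(\<lambda>i. of_real (a i) * ee m x ^ r) sums (of_real (suminf a) * ee m x ^ r)"
      by (rule sums_mult2, rule sums_of_real, rule summable_sums[OF sm])
    then show ?thesis by (simp add: sums_iff)
  qed
  also have "\<dots> = ee m (x * int r)" using sa by (simp add: sums_iff ee_pow mult.commute)
  finally show ?thesis .
qed

lemma Pc_triv_iter: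
  fixes a :: "nat \<Rightarrow> real"
  assumes m: "0 < m" and sa: "a sums 1" and rb: "\<forall>i<r. a i = 0"
    and tr: "\<forall>q. a (r + q) \<noteq> 0 \<longrightarrow> int m dvd j * int q"
  shows "(Pc a ^^ n) (ee m j) = ee m (j * int r ^ n)"
proof (induction n)
  case 0 then show ?case by simp
next
  case (Suc n)
  have tr': "\<forall>q. a (r + q) \<noteq> 0 \<longrightarrow> int m dvd (j * int r ^ n) * int q"
    using tr by (metis dvd_mult mult.commute mult.left_commute)
  show ?case using Pc_triv[OF m sa rb tr'] Suc by (simp add: mult_ac)
qed

lemma shift_sum:
  assumes m: "0 < m" and s: "s \<in> {0..<int m}"
  shows "(\<Sum>l\<in>{0..<int m}. f ((l + s) mod int m)) = (\<Sum>l\<in>{0..<int m}. f l)"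
proof (rule sum.reindex_bij_witness[where i="\<lambda>l. (l - s) mod int m" and j="\<lambda>l. (l + s) mod int m"])
  fix l :: int assume l: "l \<in> {0..<int m}"
  have "((l + s) mod int m - s) mod int m = (l + s - s) mod int m" by (rule mod_diff_left_eq)
  then show "((l + s) mod int m - s) mod int m = l" using l by simp
  show "(l + s) mod int m \<in> {0..<int m}" using m by simp
  show "((l - s) mod int m + s) mod int m = l"
  proof -
    have "((l - s) mod int m + s) mod int m = (l - s + s) mod int m" by (rule mod_add_left_eq)
    then show ?thesis using l by simp
  qed
  show "(l - s) mod int m \<in> {0..<int m}" using m by simp
  show "f ((l + s) mod int m) = f ((l + s) mod int m)" by simp
qed

lemma coset_mem: "x \<in> coset_Cm m g H \<longleftrightarrow> (\<exists>h\<in>H. x = (g + h) mod int m)"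
  by (auto simp: coset_Cm_def l_coset_def)

lemma nontriv_conv:
  fixes a :: "nat \<Rightarrow> real"
  assumes m: "0 < m" and an: "\<And>i. 0 \<le> a i" and sa: "a sums 1" and alt: "\<And>i. a i < 1"
    and rf: "a r \<noteq> 0" and q: "a (r + q) \<noteq> 0" "\<not> int m dvd j * int q"
  shows "(\<lambda>n. (Pc a ^^ n) (ee m j)) \<longlonglongrightarrow> of_real (lim (\<lambda>n. iter a n 0))"
proof -
  define al where "al = lim (\<lambda>n. iter a n 0)"
  have xc: "(\<lambda>n. iter a n 0) \<longlonglongrightarrow> al" and al0: "0 \<le> al" and al1: "al \<le> 1"
    using xseq_conv[OF an sa] al_def by auto
  show ?thesis
  proof (cases "al = 1")
    case True
    have b: "norm ((Pc a ^^ n) (ee m j) - of_real (iter a n 0)) \<le> 1 - iter a n 0" for n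
      by (rule mass_bound[OF an sa]) simp
    have "(\<lambda>n. 1 - iter a n 0) \<longlonglongrightarrow> 0" using xc True by (intro tendsto_eq_intros) auto
    then have "(\<lambda>n. (Pc a ^^ n) (ee m j) - of_real (iter a n 0)) \<longlonglongrightarrow> 0"
      by (rule Lim_null_comparison[rotated]) (use b in auto)
    moreover have "(\<lambda>n. of_real (iter a n 0) :: complex) \<longlonglongrightarrow> of_real al"
      using xc by (rule tendsto_of_real)
    ultimately have "(\<lambda>n. ((Pc a ^^ n) (ee m j) - of_real (iter a n 0)) + of_real (iter a n 0)) \<longlonglongrightarrow> 0 + of_real al"
      by (rule tendsto_add)
    then show ?thesis using al_def by simp
  next
    case False
    then have al1': "al < 1" using al1 by simp
    have fp: "Pc a al = al" using fixpt[OF an sa] al1' al_def by simp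
    have ar: "0 < a r" using an[of r] rf by simp
    have aq: "0 < a (r + q)" using an[of "r + q"] q(1) by simp
    have ne: "ee m j ^ r \<noteq> ee m j ^ (r + q)"
    proof
      assume "ee m j ^ r = ee m j ^ (r + q)"
      then have "ee m j ^ r * 1 = ee m j ^ r * ee m j ^ q" by (simp add: power_add)
      moreover have "ee m j ^ r \<noteq> 0" using norm_ee[of m j] by (metis norm_zero power_eq_0_iff zero_neq_one)
      ultimately have "ee m j ^ q = 1" by (metis mult_left_cancel)
      then show False using q(2) ee_eq_1[OF m] by (simp add: ee_pow mult.commute)
    qed
    have w0: "norm (Pc a (ee m j)) < 1" by (rule strict_lt1[OF an sa _ ar aq ne]) simp
    have "(\<lambda>n. (Pc a ^^ n) (Pc a (ee m j))) \<longlonglongrightarrow> of_real al"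
      by (rule contraction_conv[OF an sa alt al0 al1' fp w0])
    then have "(\<lambda>n. (Pc a ^^ Suc n) (ee m j)) \<longlonglongrightarrow> of_real al" by (simp only: funpow_Suc_right o_def)
    then show ?thesis unfolding al_def by (rule LIMSEQ_imp_Suc)
  qed
qed

lemma Gp0_eq: "G_p0 m a r = generate (integer_mod_group m) (Sg m (\<lambda>q. a (r + q) \<noteq> 0))"
  by (simp add: G_p0_def Sg_def)

lemma c_p0_eq:
  assumes m: "0 < m"
  shows "c_p0 m a r l = (if l \<in> G_p0 m a r then 1 / real (card (G_p0 m a r)) else 0)"
proof -
  define G where "G = G_p0 m a r"
  have Gc: "G \<subseteq> {0..<int m}" using Gcarr[OF m] by (simp add: G_def Gp0_eq)
  have fin: "finite G" using Gfin[OF m] by (simp add: G_def Gp0_eq)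
  have "gr_sum m G l = (\<Sum>g\<in>G. if g = l then 1 else 0)"
    unfolding gr_sum_def gr_basis_def
  proof (rule sum.cong[OF refl])
    fix g assume "g \<in> G"
    then have "g \<in> {0..<int m}" using Gc by auto
    then show "(if l \<in> {0..<int m} \<and> l = g mod int m then 1 else 0) = (if g = l then 1 else (0::real))"
      by auto
  qed
  also have "\<dots> = (if l \<in> G then 1 else 0)" using fin by (simp add: sum.delta)
  finally show ?thesis by (simp add: c_p0_def G_def)
qed

lemma target_outside:
  assumes m: "0 < m" and l: "l \<notin> {0..<int m}"
  shows "gr_mult m (gr_basis m m0) (c_p0 m a r) l + al * (gr_basis m 0 l - c_p0 m a r l) = 0"
proof -
  have "l \<notin> G_p0 m a r" using l Gcarr[OF m, of "\<lambda>q. a (r + q) \<noteq> 0"] by (auto simp: Gp0_eq)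
  moreover have "\<not> (0 \<le> l \<and> l < int m)" using l by auto
  ultimately show ?thesis by (auto simp: gr_mult_def gr_basis_def c_p0_eq[OF m])
qed

lemma target_dft:
  assumes m: "0 < m" and m0: "m0 \<in> {0..<int m}"
  shows "dft m (\<lambda>l. gr_mult m (gr_basis m m0) (c_p0 m a r) l + al * (gr_basis m 0 l - c_p0 m a r l)) j
     = (if \<forall>q. a (r + q) \<noteq> 0 \<longrightarrow> int m dvd j * int q then ee m (j * m0) else of_real al)"
proof -
  define G where "G = G_p0 m a r"
  define tr where "tr = (\<forall>q. a (r + q) \<noteq> 0 \<longrightarrow> int m dvd j * int q)"
  define cG where "cG l = (if l \<in> G then 1 / real (card G) else 0)" for l
  have Gc: "G \<subseteq> {0..<int m}" using Gcarr[OF m] by (simp add: G_def Gp0_eq)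
  have fin: "finite G" using Gfin[OF m] by (simp add: G_def Gp0_eq)
  have G0': "0 \<in> G" using G0[OF m] by (simp add: G_def Gp0_eq)
  have cardpos: "card G \<noteq> 0" using fin G0' by auto
  have c_eq: "c_p0 m a r l = cG l" for l using c_p0_eq[OF m] by (simp add: cG_def G_def)
  have gs: "(\<Sum>g\<in>G. ee m (j * g)) = (if tr then of_nat (card G) else 0)"
    using Gsum[OF m, where P="\<lambda>q. a (r + q) \<noteq> 0" and j=j] by (auto simp: G_def Gp0_eq tr_def)
  have S1: "(\<Sum>l\<in>{0..<int m}. of_real (cG l) * ee m (j * l)) = (if tr then 1 else 0)"
  proof -
    have "(\<Sum>l\<in>{0..<int m}. of_real (cG l) * ee m (j * l))
        = (\<Sum>l\<in>{0..<int m}. if l \<in> G then ee m (j * l) / of_nat (card G) else 0)"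
      by (rule sum.cong) (auto simp: cG_def)
    also have "\<dots> = (\<Sum>l\<in>{0..<int m} \<inter> G. ee m (j * l) / of_nat (card G))"
      by (simp add: sum.inter_restrict)
    also have "{0..<int m} \<inter> G = G" using Gc by auto
    also have "(\<Sum>l\<in>G. ee m (j * l) / of_nat (card G)) = (\<Sum>l\<in>G. ee m (j * l)) / of_nat (card G)"
      by (simp add: sum_divide_distrib)
    also have "\<dots> = (if tr then 1 else 0)" using gs cardpos by simp
    finally show ?thesis .
  qed
  have gm: "gr_mult m (gr_basis m m0) (c_p0 m a r) l = cG ((l - m0) mod int m)" if l: "l \<in> {0..<int m}" for l
  proof -
    have "gr_mult m (gr_basis m m0) (c_p0 m a r) l = (\<Sum>i\<in>{0..<int m}. if i = m0 then cG ((l - i) mod int m) else 0)"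
    proof -
      have "gr_mult m (gr_basis m m0) (c_p0 m a r) l = (\<Sum>i\<in>{0..<int m}. (if i = m0 then 1 else 0) * cG ((l - i) mod int m))"
        unfolding gr_mult_def using l m0 by (auto simp: gr_basis_def c_eq intro!: sum.cong)
      also have "\<dots> = (\<Sum>i\<in>{0..<int m}. if i = m0 then cG ((l - i) mod int m) else 0)"
        by (rule sum.cong) auto
      finally show ?thesis .
    qed
    also have "\<dots> = cG ((l - m0) mod int m)" using m0 by (simp add: sum.delta)
    finally show ?thesis .
  qed
  have S2: "(\<Sum>l\<in>{0..<int m}. of_real (cG ((l - m0) mod int m)) * ee m (j * l)) = ee m (j * m0) * (if tr then 1 else 0)"
  proof -
    have "(\<Sum>l\<in>{0..<int m}. of_real (cG ((l - m0) mod int m)) * ee m (j * l))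
        = (\<Sum>l\<in>{0..<int m}. of_real (cG (((l + m0) mod int m - m0) mod int m)) * ee m (j * ((l + m0) mod int m)))"
      by (rule shift_sum[OF m m0, symmetric])
    also have "\<dots> = (\<Sum>l\<in>{0..<int m}. ee m (j * m0) * (of_real (cG l) * ee m (j * l)))"
    proof (rule sum.cong[OF refl])
      fix l assume l: "l \<in> {0..<int m}"
      have "((l + m0) mod int m - m0) mod int m = (l + m0 - m0) mod int m" by (rule mod_diff_left_eq)
      then have e1: "((l + m0) mod int m - m0) mod int m = l" using l by simp
      have "ee m (j * ((l + m0) mod int m)) = ee m (j * (l + m0))"
        by (rule ee_cong[OF m mod_mult_right_eq])
      then show "of_real (cG (((l + m0) mod int m - m0) mod int m)) * ee m (j * ((l + m0) mod int m))
          = ee m (j * m0) * (of_real (cG l) * ee m (j * l))"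
        using e1 by (simp add: distrib_left ee_add mult_ac)
    qed
    also have "\<dots> = ee m (j * m0) * (if tr then 1 else 0)" using S1 by (simp add: sum_distrib_left[symmetric])
    finally show ?thesis .
  qed
  have "dft m (\<lambda>l. gr_mult m (gr_basis m m0) (c_p0 m a r) l + al * (gr_basis m 0 l - c_p0 m a r l)) j
      = (\<Sum>l\<in>{0..<int m}. of_real (cG ((l - m0) mod int m)) * ee m (j * l)
          + of_real al * ((if l = 0 then 1 else 0) * ee m (j * l) - of_real (cG l) * ee m (j * l)))"
    unfolding dft_def
  proof (rule sum.cong[OF refl])
    fix l assume l: "l \<in> {0..<int m}"
    have gb: "gr_basis m 0 l = (if l = 0 then 1 else 0)" using l by (auto simp: gr_basis_def)
    show "of_real (gr_mult m (gr_basis m m0) (c_p0 m a r) l + al * (gr_basis m 0 l - c_p0 m a r l)) * ee m (j * l)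
      = of_real (cG ((l - m0) mod int m)) * ee m (j * l)
          + of_real al * ((if l = 0 then 1 else 0) * ee m (j * l) - of_real (cG l) * ee m (j * l))"
      unfolding gm[OF l] gb c_eq by (simp add: algebra_simps)
  qed
  also have "\<dots> = (\<Sum>l\<in>{0..<int m}. of_real (cG ((l - m0) mod int m)) * ee m (j * l))
        + of_real al * ((\<Sum>l\<in>{0..<int m}. (if l = 0 then 1 else 0) * ee m (j * l)) - (\<Sum>l\<in>{0..<int m}. of_real (cG l) * ee m (j * l)))"
    by (simp add: sum.distrib sum_subtractf[symmetric] sum_distrib_left[symmetric])
  also have "(\<Sum>l\<in>{0..<int m}. (if l = 0 then 1 else 0) * ee m (j * l)) = 1"
    using m by (simp add: sum.delta if_distrib[of "\<lambda>x. x * _"] cong: if_cong)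
  finally show ?thesis using S1 S2 tr_def by auto
qed



theorem theorem4:
  fixes a :: "nat \<Rightarrow> real" and r m d :: nat and ms :: "nat \<Rightarrow> int"
  assumes a_nonneg: "\<forall>i. 0 \<le> a i" and a_lt1: "\<forall>i. a i < 1"
    and a_sums: "a sums 1"
    and r_first: "a r \<noteq> 0" and r_below: "\<forall>i<r. a i = 0"
    and two_nz: "\<exists>q1 q2. q1 \<noteq> q2 \<and> a (r + q1) \<noteq> 0 \<and> a (r + q2) \<noteq> 0"
    and m_pos: "0 < m"
    and d_pos: "1 \<le> d"
    and ms_range: "\<forall>i<d. ms i \<in> {0..<int m}"
    and ms_distinct: "inj_on ms {..<d}"
    and ms_period: "\<exists>K. \<forall>k\<ge>K. \<forall>i<d. (int r) ^ (k * d + i) mod int m = ms i"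
  shows "((\<Inter>i\<in>{..<d}. coset_Cm m (ms i) (G_p0 m a r)) = {} \<longrightarrow>
            \<not> convergent (\<lambda>n. ev_Cm m (iter a n)))
       \<and> ((\<Inter>i\<in>{..<d}. coset_Cm m (ms i) (G_p0 m a r)) \<noteq> {} \<longrightarrow>
            (\<forall>i<d. \<forall>j<d. coset_Cm m (ms i) (G_p0 m a r) = coset_Cm m (ms j) (G_p0 m a r))
          \<and> (\<lambda>n. ev_Cm m (iter a n)) \<longlonglongrightarrow>
               (\<lambda>j. gr_mult m (gr_basis m (ms 0)) (c_p0 m a r) j
                + lim (\<lambda>n. iter a n 0) * (gr_basis m 0 j - c_p0 m a r j)))"
proof -
  have an: "\<And>i. 0 \<le> a i" using a_nonneg by blast
  have alt: "\<And>i. a i < 1" using a_lt1 by blast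
  note m = m_pos
  define P where "P = (\<lambda>q. a (r + q) \<noteq> 0)"
  define G where "G = G_p0 m a r"
  have Gd: "G = generate (integer_mod_group m) (Sg m P)" by (simp add: G_def Gp0_eq P_def)
  define triv where "triv j = (\<forall>q. P q \<longrightarrow> int m dvd j * int q)" for j
  define v where "v n = ev_Cm m (iter a n)" for n
  define al where "al = lim (\<lambda>n. iter a n 0)"
  obtain K where K: "\<And>k i. k \<ge> K \<Longrightarrow> i < d \<Longrightarrow> (int r) ^ (k * d + i) mod int m = ms i"
    using ms_period by blast
  have X: "dft m (v n) j = (Pc a ^^ n) (ee m j)" for n j
  proof -
    have nn: "\<And>k. 0 \<le> iter a n k" and sb: "summable (iter a n)"
      using iter_real[OF an a_sums, of n] by (auto simp: sums_iff)
    have "(\<lambda>k. of_real (iter a n k) * ee m j ^ k) sums dft m (v n) j"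
      unfolding v_def by (rule regroup[OF m nn sb])
    moreover have "(\<lambda>k. of_real (iter a n k) * ee m j ^ k) sums ((Pc a ^^ n) (ee m j))"
      by (rule iter_sums[OF an a_sums]) simp
    ultimately show ?thesis by (rule sums_unique2)
  qed
  have Xtriv: "dft m (v n) j = ee m (j * int r ^ n)" if "triv j" for n j
    unfolding X using that by (intro Pc_triv_iter[OF m a_sums r_below]) (simp add: triv_def P_def)
  have Xnt: "(\<lambda>n. dft m (v n) j) \<longlonglongrightarrow> of_real al" if nt: "\<not> triv j" for j
  proof -
    obtain q where q: "a (r + q) \<noteq> 0" "\<not> int m dvd j * int q" using nt by (auto simp: triv_def P_def)
    show ?thesis unfolding X al_def by (rule nontriv_conv[OF m an a_sums alt r_first q])
  qed
  have period: "ee m (j * int r ^ (k * d + i)) = ee m (j * ms i)" if "k \<ge> K" "i < d" for j k i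
  proof -
    have "ee m (j * int r ^ (k * d + i)) = ee m (j * (int r ^ (k * d + i) mod int m))"
      by (rule ee_cong[OF m mod_mult_right_eq[symmetric]])
    then show ?thesis using K[OF that] by simp
  qed
  have sub: "subgroup G (integer_mod_group m)" unfolding Gd by (rule Gsub[OF m])
  have Gc: "G \<subseteq> {0..<int m}" unfolding Gd by (rule Gcarr[OF m])
  have G0': "0 \<in> G" unfolding Gd by (rule G0[OF m])
  have msr: "\<And>i. i < d \<Longrightarrow> 0 \<le> ms i \<and> ms i < int m" using ms_range by auto
  have d0: "0 < d" using d_pos by simp
  have kill: "ee m (j * g) = 1" if "triv j" "g \<in> G" for j g
    using Gkill[OF m _ that(2)[unfolded Gd]] that(1) ee_eq_1[OF m] by (auto simp: triv_def)
  have part1: "(\<Inter>i\<in>{..<d}. coset_Cm m (ms i) G) = {} \<longrightarrow> \<not> convergent v"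
  proof (intro impI notI)
    assume empty: "(\<Inter>i\<in>{..<d}. coset_Cm m (ms i) G) = {}"
    assume "convergent v"
    then obtain L where L: "v \<longlonglongrightarrow> L" by (auto simp: convergent_def)
    have vl: "\<And>l. (\<lambda>n. v n l) \<longlonglongrightarrow> L l" using L tendsto_fun_iff by metis
    have lim_i: "dft m L j = ee m (j * ms i)" if tj: "triv j" and i: "i < d" for i j
    proof -
      have c: "(\<lambda>n. dft m (v n) j) \<longlonglongrightarrow> dft m L j" by (rule dft_tendsto[OF vl])
      have sm: "strict_mono (\<lambda>k. k * d + i)" using d0 by (auto simp: strict_mono_def)
      have s1: "(\<lambda>k. dft m (v (k * d + i)) j) \<longlonglongrightarrow> dft m L j"
        using LIMSEQ_subseq_LIMSEQ[OF c sm] by (simp add: o_def)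
      have "eventually (\<lambda>k. dft m (v (k * d + i)) j = ee m (j * ms i)) sequentially"
        unfolding eventually_sequentially
        by (rule exI[of _ K]) (use Xtriv[OF tj] period i in simp)
      then have s2: "(\<lambda>k. dft m (v (k * d + i)) j) \<longlonglongrightarrow> ee m (j * ms i)"
        by (rule tendsto_eventually)
      show ?thesis using LIMSEQ_unique[OF s1 s2] .
    qed
    have "ms 0 \<in> (\<Inter>i\<in>{..<d}. coset_Cm m (ms i) G)"
    proof
      fix i assume "i \<in> {..<d}"
      then have i: "i < d" by simp
      have dv: "int m dvd j * (ms 0 - ms i)" if tj: "triv j" for j
      proof -
        have "ee m (j * ms 0) = ee m (j * ms i)" using lim_i[OF tj i] lim_i[OF tj d0] by simp
        moreover have "ee m (j * ms 0) = ee m (j * (ms 0 - ms i)) * ee m (j * ms i)"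
          by (simp add: ee_add[symmetric] algebra_simps)
        moreover have "ee m (j * ms i) \<noteq> 0" using norm_ee[of m "j * ms i"] by (metis norm_zero zero_neq_one)
        ultimately have "ee m (j * (ms 0 - ms i)) = 1" by (metis mult_cancel_right2)
        then show ?thesis using ee_eq_1[OF m] by simp
      qed
      have hG: "(ms 0 - ms i) mod int m \<in> G" unfolding Gd
        by (rule Gsep[OF m]) (use dv in \<open>auto simp: triv_def\<close>)
      have "(ms i + (ms 0 - ms i) mod int m) mod int m = (ms i + (ms 0 - ms i)) mod int m"
        by (rule mod_add_right_eq)
      also have "\<dots> = ms 0" using msr[OF d0] by simp
      finally show "ms 0 \<in> coset_Cm m (ms i) G" unfolding coset_mem using hG by metis
    qed
    then show False using empty by simp
  qed
  have part2: "(\<Inter>i\<in>{..<d}. coset_Cm m (ms i) G) \<noteq> {} \<longrightarrow>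
      (\<forall>i<d. \<forall>j<d. coset_Cm m (ms i) G = coset_Cm m (ms j) G)
      \<and> v \<longlonglongrightarrow> (\<lambda>l. gr_mult m (gr_basis m (ms 0)) (c_p0 m a r) l + al * (gr_basis m 0 l - c_p0 m a r l))"
  proof
    assume "(\<Inter>i\<in>{..<d}. coset_Cm m (ms i) G) \<noteq> {}"
    then obtain x where x: "\<And>i. i < d \<Longrightarrow> x \<in> coset_Cm m (ms i) G" by auto
    have cx: "coset_Cm m (ms i) G = coset_Cm m x G" if i: "i < d" for i
      unfolding coset_Cm_def
      by (rule group.l_repr_independence[OF group_integer_mod_group _ _ sub])
         (use x[OF i] msr[OF i] m in \<open>auto simp: coset_Cm_def carrier_integer_mod_group\<close>)
    have ceq: "\<forall>i<d. \<forall>j<d. coset_Cm m (ms i) G = coset_Cm m (ms j) G" using cx by simp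
    have same: "ee m (j * ms i) = ee m (j * ms 0)" if tj: "triv j" and i: "i < d" for i j
    proof -
      have "ms i \<in> coset_Cm m (ms i) G" unfolding coset_mem using G0' msr[OF i] by force
      then have "ms i \<in> coset_Cm m (ms 0) G" using cx[OF i] cx[OF d0] by simp
      then obtain h where h: "h \<in> G" "ms i = (ms 0 + h) mod int m" unfolding coset_mem by blast
      have "ee m (j * ms i) = ee m (j * (ms 0 + h))"
        unfolding h(2) by (rule ee_cong[OF m mod_mult_right_eq])
      also have "\<dots> = ee m (j * ms 0) * ee m (j * h)" by (simp add: distrib_left ee_add)
      also have "\<dots> = ee m (j * ms 0)" using kill[OF tj h(1)] by simp
      finally show ?thesis .
    qed
    have dconv: "(\<lambda>n. dft m (v n) j) \<longlonglongrightarrow> dft m (\<lambda>l. gr_mult m (gr_basis m (ms 0)) (c_p0 m a r) l + al * (gr_basis m 0 l - c_p0 m a r l)) j" for j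
    proof (cases "triv j")
      case True
      have "eventually (\<lambda>n. dft m (v n) j = ee m (j * ms 0)) sequentially"
        unfolding eventually_sequentially
      proof (intro exI allI impI)
        fix n assume n: "K * d \<le> n"
        have k: "K \<le> n div d" using div_le_mono[OF n, of d] d0 by simp
        have "dft m (v n) j = ee m (j * int r ^ ((n div d) * d + n mod d))" using Xtriv[OF True, of n] by simp
        also have "\<dots> = ee m (j * ms (n mod d))" by (rule period[OF k]) (use d0 in simp)
        also have "\<dots> = ee m (j * ms 0)" by (rule same[OF True]) (use d0 in simp)
        finally show "dft m (v n) j = ee m (j * ms 0)" .
      qed
      then have "(\<lambda>n. dft m (v n) j) \<longlonglongrightarrow> ee m (j * ms 0)" by (rule tendsto_eventually)
      then show ?thesis using target_dft[OF m ms_range[rule_format, OF d0]] True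
        by (simp add: triv_def P_def)
    next
      case False
      then show ?thesis using Xnt[OF False] target_dft[OF m ms_range[rule_format, OF d0]]
        by (auto simp: triv_def P_def)
    qed
    have "v \<longlonglongrightarrow> (\<lambda>l. gr_mult m (gr_basis m (ms 0)) (c_p0 m a r) l + al * (gr_basis m 0 l - c_p0 m a r l))"
      unfolding tendsto_fun_iff
    proof
      fix l
      show "(\<lambda>n. v n l) \<longlonglongrightarrow> gr_mult m (gr_basis m (ms 0)) (c_p0 m a r) l + al * (gr_basis m 0 l - c_p0 m a r l)"
      proof (cases "l \<in> {0..<int m}")
        case True
        show ?thesis by (rule conv_from_dft[OF m _ True]) (rule dconv)
      next
        case False
        have vl0: "v n l = 0" for n unfolding v_def ev_Cm_def using False by (simp del: atLeastLessThan_iff)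
        have e: "gr_mult m (gr_basis m (ms 0)) (c_p0 m a r) l + al * (gr_basis m 0 l - c_p0 m a r l) = 0"
          by (rule target_outside[OF m False])
        show ?thesis unfolding e vl0 by (rule tendsto_const)
      qed
    qed
    then show "(\<forall>i<d. \<forall>j<d. coset_Cm m (ms i) G = coset_Cm m (ms j) G)
      \<and> v \<longlonglongrightarrow> (\<lambda>l. gr_mult m (gr_basis m (ms 0)) (c_p0 m a r) l + al * (gr_basis m 0 l - c_p0 m a r l))"
      using ceq by (intro conjI)
  qed
  show ?thesis
  proof (rule conjI)
    show "(\<Inter>i\<in>{..<d}. coset_Cm m (ms i) (G_p0 m a r)) = {} \<longrightarrow> \<not> convergent (\<lambda>n. ev_Cm m (iter a n))"
      using part1 unfolding G_def v_def .
    show "(\<Inter>i\<in>{..<d}. coset_Cm m (ms i) (G_p0 m a r)) \<noteq> {} \<longrightarrow>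
            (\<forall>i<d. \<forall>j<d. coset_Cm m (ms i) (G_p0 m a r) = coset_Cm m (ms j) (G_p0 m a r))
          \<and> (\<lambda>n. ev_Cm m (iter a n)) \<longlonglongrightarrow>
               (\<lambda>j. gr_mult m (gr_basis m (ms 0)) (c_p0 m a r) j
                + lim (\<lambda>n. iter a n 0) * (gr_basis m 0 j - c_p0 m a r j))"
      using part2 unfolding G_def v_def al_def .
  qed
qed


end
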